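(* Assume the Setting and consider Algorithm 1 with $0\le\beta<1$, and $\tau>1$, $\mu_0>0$ chosen such that $1-\frac{1+\eta}{\tau}-\eta-\frac{\mu_0}{4\sigma}>0$; let $n_\delta$ denote the stopping index for data $y^\delta$. Then there exists a solution $x^*$ of $F(x)=y$ with $x^*\in B_{2\rho}(x_0)\cap\mathrm{dom}(\mathcal R)$ such that for every sequence $\delta_l\to0$, $\delta_l>0$, and every choice of data $y^{\delta_l}$ with $\|y^{\delta_l}-y\|\le\delta_l$, one has $\lim_{l\to\infty}D_{\mathcal R}^{\xi_{n_{\delta_l}}^{\delta_l}}(x^*,x_{n_{\delta_l}}^{\delta_l})=0$ and $\lim_{l\to\infty}\|x_{n_{\delta_l}}^{\delta_l}-x^*\|=0$. (Here $x^*$ is the strong limit of the exact-data iterates $x_n$ of Algorithm 2 with the same parameters.) If in addition $\mathrm{Ker}(L(x^\dagger))\subset\mathrm{Ker}(L(x))$ for all $x\in B_{2\rho}(x_0)$, then $x^*=x^\dagger$.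
   Context: Setting. Let $X,Y$ be real Hilbert spaces. Let $\mathcal R:X\to(-\infty,\infty]$ be proper, lower semicontinuous and strongly convex with constant $\sigma>0$, i.e. $\mathcal R(t\bar x+(1-t)x)+\sigma t(1-t)\|\bar x-x\|^2\le t\mathcal R(\bar x)+(1-t)\mathcal R(x)$ for all $\bar x,x\in\mathrm{dom}(\mathcal R)$ and $t\in[0,1]$. For $\xi\in\partial\mathcal R(x)$ (subdifferential) the Bregman distance is $D_{\mathcal R}^{\xi}(z,x)=\mathcal R(z)-\mathcal R(x)-\langle\xi,z-x\rangle$. The convex conjugate $\mathcal R^*$ is differentiable with $\|\nabla\mathcal R^*(\bar\xi)-\nabla\mathcal R^*(\xi)\|\le\|\bar\xi-\xi\|/(2\sigma)$, and $\nabla\mathcal R^*(\xi)=\arg\min_{x\in X}\{\mathcal R(x)-\langle\xi,x\rangle\}$ (unique minimizer), with $\xi\in\partial\mathcal R(\nabla\mathcal R^*(\xi))$. Let $F:\mathrm{dom}(F)\subset X\to Y$ and $y\in Y$. Assume: (b) there are $\rho>0$, $x_0\in X$, $\xi_0\in\partial\mathcal R(x_0)$ with $B_{2\rho}(x_0):=\{x:\|x-x_0\|\le 2\rho\}\subset\mathrm{dom}(F)$, and $F(x)=y$ has a solution $\bar x$ with $D_{\mathcal R}^{\xi_0}(\bar x,x_0)\le\sigma\rho^2$; (c) $F$ is weakly closed: if $x_n\in\mathrm{dom}(F)$, $x_n\rightharpoonup x$ and $F(x_n)\to v$, then $x\in\mathrm{dom}(F)$ and $F(x)=v$; (d) there are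 bounded linear operators $L(x):X\to Y$, $x\in B_{2\rho}(x_0)$, with $x\mapsto L(x)$ continuous on $B_{2\rho}(x_0)$, a constant $\eta\in[0,1)$ with $\|F(x)-F(\bar x)-L(\bar x)(x-\bar x)\|\le\eta\|F(x)-F(\bar x)\|$ for all $x,\bar x\in B_{2\rho}(x_0)$, and a constant $L>0$ with $\|L(x)\|\le L$ on $B_{2\rho}(x_0)$. Under these assumptions $F(x)=y$ has a unique solution $x^\dagger\in\mathrm{dom}(F)$ minimizing $D_{\mathcal R}^{\xi_0}(x,x_0)$ over all solutions; it satisfies $\|x^\dagger-x_0\|\le\rho$. Algorithm 1 (noisy data $y^\delta$ with $\|y^\delta-y\|\le\delta$, $\delta>0$). Parameters: $\tau>1$, $\beta\in[0,\infty]$, $\mu_0>0$, $\mu_1>0$, and a fixed choice of one of two step-size rules: (constant) $\alpha_n^\delta=\mu_0/L^2$, or (adaptive) $\alpha_n^\delta=\min\{\mu_0\|r_n^\delta\|^2/\|g_n^\delta\|^2,\mu_1\}$ (with $\mu_0\|r_n^\delta\|^2/\|g_n^\delta\|^2:=+\infty$ if $g_n^\delta=0$). Set $\xi_{-1}^\delta=\xi_0^\delta=\xi_0$, $x_0^\delta=x_0=\nabla\mathcal R^*(\xi_0)$. For $n\ge0$: (i) $r_n^\delta:=F(x_n^\delta)-y^\delta$; if $\|r_n^\delta\|\le\tau\delta$, stop and output $x_n^\delta$ (the stopping index is denoted $n_\delta$; it is finite under the hypotheses of the claim). (ii) $g_n^\delta:=L(x_n^\delta)^*r_n^\delta$ and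 $\alpha_n^\delta$ by the chosen rule. (iii) $m_n^\delta:=\xi_n^\delta-\xi_{n-1}^\delta$; $\tilde\gamma_0^\delta:=0$ and for $n\ge1$, $\tilde\gamma_n^\delta:=\langle m_n^\delta,x_n^\delta-x_{n-1}^\delta\rangle-(1-\eta)\alpha_{n-1}^\delta\|r_{n-1}^\delta\|^2+(1+\eta)\alpha_{n-1}^\delta\delta\|r_{n-1}^\delta\|+\beta_{n-1}^\delta\tilde\gamma_{n-1}^\delta$. (iv) $\beta_n^\delta:=\min\{\max\{0,(\alpha_n^\delta\langle g_n^\delta,m_n^\delta\rangle-2\sigma\tilde\gamma_n^\delta)/\|m_n^\delta\|^2\},\beta\}$ if $m_n^\delta\ne0$, and $\beta_n^\delta:=0$ if $m_n^\delta=0$. (v) $\xi_{n+1}^\delta:=\xi_n^\delta-\alpha_n^\delta g_n^\delta+\beta_n^\delta m_n^\delta$, $x_{n+1}^\delta:=\nabla\mathcal R^*(\xi_{n+1}^\delta)$. Algorithm 2 (exact data $y$). Same parameters $\beta,\mu_0,\mu_1$ and same step-size rule type: (constant) $\alpha_n=\mu_0/L^2$, or (adaptive) $\alpha_n=\min\{\mu_0\|r_n\|^2/\|g_n\|^2,\mu_1\}$ if $r_n\ne0$ and $\alpha_n=0$ if $r_n=0$. Set $\xi_{-1}=\xi_0$, $x_0=\nabla\mathcal R^*(\xi_0)$. For all $n\ge0$ (no stopping): $r_n:=F(x_n)-y$, $g_n:=L(x_n)^*r_n$, $\alpha_n$ by the rule; $m_n:=\xi_n-\xi_{n-1}$; $\tilde\gamma_0:=0$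 and for $n\ge1$, $\tilde\gamma_n:=\langle m_n,x_n-x_{n-1}\rangle-(1-\eta)\alpha_{n-1}\|r_{n-1}\|^2+\beta_{n-1}\tilde\gamma_{n-1}$; $\beta_n:=\min\{\max\{0,(\alpha_n\langle g_n,m_n\rangle-2\sigma\tilde\gamma_n)/\|m_n\|^2\},\beta\}$ if $m_n\ne0$ and $\beta_n:=0$ if $m_n=0$; $\xi_{n+1}:=\xi_n-\alpha_ng_n+\beta_nm_n$, $x_{n+1}:=\nabla\mathcal R^*(\xi_{n+1})$. *)

theory Defs
  imports "HOL-Analysis.Analysis"
begin

definition effdom :: "('a \<Rightarrow> ereal) \<Rightarrow> 'a set" where
  "effdom R = {x. R x < \<infinity>}"

definition proper_fun :: "('a \<Rightarrow> ereal) \<Rightarrow> bool" where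
  "proper_fun R \<longleftrightarrow> (\<exists>x. R x < \<infinity>) \<and> (\<forall>x. R x > -\<infinity>)"

definition lsc_fun :: "('a::topological_space \<Rightarrow> ereal) \<Rightarrow> bool" where
  "lsc_fun R \<longleftrightarrow> (\<forall>c. closed {x. R x \<le> c})"

definition strongly_convex :: "('a::real_normed_vector \<Rightarrow> ereal) \<Rightarrow> real \<Rightarrow> bool" where
  "strongly_convex R \<sigma> \<longleftrightarrow>
     (\<forall>xb\<in>effdom R. \<forall>x\<in>effdom R. \<forall>t::real. 0 \<le> t \<and> t \<le> 1 \<longrightarrow>
        R (t *\<^sub>R xb + (1 - t) *\<^sub>R x) + ereal (\<sigma> * t * (1 - t) * (norm (xb - x))\<^sup>2)
          \<le> ereal t * R xb + ereal (1 - t) * R x)"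

definition subdiff :: "('a::real_inner \<Rightarrow> ereal) \<Rightarrow> 'a \<Rightarrow> 'a set" where
  "subdiff R x = {\<xi>. R x < \<infinity> \<and> R x > -\<infinity> \<and>
                      (\<forall>z. R z \<ge> R x + ereal (\<xi> \<bullet> (z - x)))}"

definition bregman :: "('a::real_inner \<Rightarrow> ereal) \<Rightarrow> 'a \<Rightarrow> 'a \<Rightarrow> 'a \<Rightarrow> ereal" where
  "bregman R \<xi> z x = R z - R x - ereal (\<xi> \<bullet> (z - x))"

text \<open>Gradient of the convex conjugate: the unique minimizer of R(x) - <xi,x>.\<close>
definition gradRstar :: "('a::real_inner \<Rightarrow> ereal) \<Rightarrow> 'a \<Rightarrow> 'a" where
  "gradRstar R \<xi> = (THE x. \<forall>z. R x - ereal (\<xi> \<bullet> x) \<le> R z - ereal (\<xi> \<bullet> z))"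

definition weak_conv :: "(nat \<Rightarrow> 'a::real_inner) \<Rightarrow> 'a \<Rightarrow> bool" where
  "weak_conv xs x \<longleftrightarrow> (\<forall>z. (\<lambda>n. xs n \<bullet> z) \<longlonglongrightarrow> x \<bullet> z)"

definition xdag :: "('a::real_inner \<Rightarrow> ereal) \<Rightarrow> ('a \<Rightarrow> 'b) \<Rightarrow> 'a set \<Rightarrow> 'b \<Rightarrow> 'a \<Rightarrow> 'a \<Rightarrow> 'a" where
  "xdag R F domF y \<xi>0 x0 = (THE x. x \<in> domF \<and> F x = y \<and>
      (\<forall>z\<in>domF. F z = y \<longrightarrow> bregman R \<xi>0 x x0 \<le> bregman R \<xi>0 z x0))"

text \<open>Step size. adaptive = False: constant rule mu0/L^2. exact = True: Algorithm 2 convention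
  (alpha = 0 if r = 0); exact = False: Algorithm 1 convention (quotient = +infinity if g = 0).\<close>
definition stepsize :: "bool \<Rightarrow> bool \<Rightarrow> real \<Rightarrow> real \<Rightarrow> real \<Rightarrow> real \<Rightarrow> real \<Rightarrow> real" where
  "stepsize adaptive exact \<mu>0 \<mu>1 Lc nr ng =
     (if \<not> adaptive then \<mu>0 / Lc\<^sup>2
      else if exact \<and> nr = 0 then 0
      else if ng = 0 then \<mu>1
      else min (\<mu>0 * nr\<^sup>2 / ng\<^sup>2) \<mu>1)"

definition momentum :: "real \<Rightarrow> real \<Rightarrow> real \<Rightarrow> real \<Rightarrow> 'a::real_inner \<Rightarrow> 'a \<Rightarrow> real" where
  "momentum \<beta> \<sigma> \<alpha> \<gamma> g m =
     (if m = 0 then 0 else min (max 0 ((\<alpha> * (g \<bullet> m) - 2 * \<sigma> * \<gamma>) / (norm m)\<^sup>2)) \<beta>)"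

text \<open>State at index n is (xi_{n-1}, xi_n, gammatilde_n).
  Algorithm 1 with data yd and noise level delta: exact = False.
  Algorithm 2 with exact data y: exact = True and delta = 0 (the delta-term then vanishes).\<close>
primrec iter :: "('a::real_inner \<Rightarrow> ereal) \<Rightarrow> ('a \<Rightarrow> 'b::real_inner) \<Rightarrow> ('a \<Rightarrow> ('a \<Rightarrow>\<^sub>L 'b))
    \<Rightarrow> real \<Rightarrow> real \<Rightarrow> real \<Rightarrow> real \<Rightarrow> real \<Rightarrow> real \<Rightarrow> bool \<Rightarrow> bool \<Rightarrow> 'a
    \<Rightarrow> real \<Rightarrow> 'b \<Rightarrow> nat \<Rightarrow> 'a \<times> 'a \<times> real" where
  "iter R F L Lc \<eta> \<sigma> \<beta> \<mu>0 \<mu>1 adaptive exact \<xi>0 \<delta> yd 0 = (\<xi>0, \<xi>0, 0)"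
| "iter R F L Lc \<eta> \<sigma> \<beta> \<mu>0 \<mu>1 adaptive exact \<xi>0 \<delta> yd (Suc n) =
    (case iter R F L Lc \<eta> \<sigma> \<beta> \<mu>0 \<mu>1 adaptive exact \<xi>0 \<delta> yd n of (\<xi>p, \<xi>, \<gamma>) \<Rightarrow>
      let x = gradRstar R \<xi>;
          r = F x - yd;
          g = adjoint (blinfun_apply (L x)) r;
          \<alpha> = stepsize adaptive exact \<mu>0 \<mu>1 Lc (norm r) (norm g);
          m = \<xi> - \<xi>p;
          b = momentum \<beta> \<sigma> \<alpha> \<gamma> g m;
          \<xi>n = \<xi> - \<alpha> *\<^sub>R g + b *\<^sub>R m;
          xn = gradRstar R \<xi>n
      in (\<xi>, \<xi>n, (\<xi>n - \<xi>) \<bullet> (xn - x) - (1 - \<eta>) * \<alpha> * (norm r)\<^sup>2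
                     + (1 + \<eta>) * \<alpha> * \<delta> * norm r + b * \<gamma>))"

definition iter_xi where
  "iter_xi R F L Lc \<eta> \<sigma> \<beta> \<mu>0 \<mu>1 adaptive exact \<xi>0 \<delta> yd n =
     fst (snd (iter R F L Lc \<eta> \<sigma> \<beta> \<mu>0 \<mu>1 adaptive exact \<xi>0 \<delta> yd n))"

definition iter_x where
  "iter_x R F L Lc \<eta> \<sigma> \<beta> \<mu>0 \<mu>1 adaptive exact \<xi>0 \<delta> yd n =
     gradRstar R (iter_xi R F L Lc \<eta> \<sigma> \<beta> \<mu>0 \<mu>1 adaptive exact \<xi>0 \<delta> yd n)"

definition stop_index where
  "stop_index R F L Lc \<eta> \<sigma> \<beta> \<mu>0 \<mu>1 adaptive \<xi>0 \<tau> \<delta> yd =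
     (LEAST n. norm (F (iter_x R F L Lc \<eta> \<sigma> \<beta> \<mu>0 \<mu>1 adaptive False \<xi>0 \<delta> yd n) - yd) \<le> \<tau> * \<delta>)"

end

theory Submission
  imports Defs
begin


locale Rsetting =
  fixes R :: "'a::{real_inner,complete_space} \<Rightarrow> ereal" and \<sigma> :: real
    and x0 \<xi>0 :: 'a
  assumes R_proper: "proper_fun R" and R_lsc: "lsc_fun R"
    and sigma_pos: "\<sigma> > 0" and R_sc: "strongly_convex R \<sigma>"
    and xi0: "\<xi>0 \<in> subdiff R x0"
begin

definition Rr where "Rr x = real_of_ereal (R x)"

lemma R_ninf: "R x \<noteq> -\<infinity>"
  using R_proper unfolding proper_fun_def by auto

lemma R_fin: "x \<in> effdom R \<Longrightarrow> R x = ereal (Rr x)"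
  using R_ninf[of x] unfolding effdom_def Rr_def by (cases "R x") auto

lemma effdom_iff: "x \<in> effdom R \<longleftrightarrow> R x \<noteq> \<infinity>"
  unfolding effdom_def by auto

lemma not_effdom: "x \<notin> effdom R \<Longrightarrow> R x = \<infinity>"
  unfolding effdom_def by auto

lemma effdom_ne: "effdom R \<noteq> {}"
  using R_proper unfolding proper_fun_def effdom_def by auto

lemma sc_real:
  assumes "xb \<in> effdom R" "x \<in> effdom R" "0 \<le> t" "t \<le> 1"
  shows "t *\<^sub>R xb + (1 - t) *\<^sub>R x \<in> effdom R \<and>
    Rr (t *\<^sub>R xb + (1 - t) *\<^sub>R x) + \<sigma> * t * (1 - t) * (norm (xb - x))\<^sup>2 \<le> t * Rr xb + (1 - t) * Rr x"
proof -
  let ?w = "t *\<^sub>R xb + (1 - t) *\<^sub>R x"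
  have h: "R ?w + ereal (\<sigma> * t * (1 - t) * (norm (xb - x))\<^sup>2) \<le> ereal t * R xb + ereal (1 - t) * R x"
    using R_sc assms unfolding strongly_convex_def by blast
  have rhs: "ereal t * R xb + ereal (1 - t) * R x = ereal (t * Rr xb + (1 - t) * Rr x)"
    using R_fin[OF assms(1)] R_fin[OF assms(2)] by simp
  have "R ?w \<noteq> \<infinity>"
  proof
    assume "R ?w = \<infinity>"
    then show False using h rhs by simp
  qed
  then have w: "?w \<in> effdom R" using effdom_iff by blast
  from h rhs R_fin[OF w] show ?thesis using w by simp
qed

lemma subdiff_iff: "\<xi> \<in> subdiff R x \<longleftrightarrow> x \<in> effdom R \<and> (\<forall>z\<in>effdom R. Rr z \<ge> Rr x + \<xi> \<bullet> (z - x))"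
proof
  assume a: "\<xi> \<in> subdiff R x"
  then have x: "x \<in> effdom R" unfolding subdiff_def effdom_def by auto
  show "x \<in> effdom R \<and> (\<forall>z\<in>effdom R. Rr z \<ge> Rr x + \<xi> \<bullet> (z - x))"
  proof (intro conjI ballI x)
    fix z assume z: "z \<in> effdom R"
    have "R z \<ge> R x + ereal (\<xi> \<bullet> (z - x))" using a unfolding subdiff_def by auto
    then show "Rr z \<ge> Rr x + \<xi> \<bullet> (z - x)" using R_fin[OF x] R_fin[OF z] by simp
  qed
next
  assume a: "x \<in> effdom R \<and> (\<forall>z\<in>effdom R. Rr z \<ge> Rr x + \<xi> \<bullet> (z - x))"
  show "\<xi> \<in> subdiff R x"
    unfolding subdiff_def
  proof (intro CollectI conjI allI)
    show "R x < \<infinity>" using a unfolding effdom_def by auto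
    show "R x > -\<infinity>" using R_ninf[of x] by (cases "R x") auto
    fix z
    show "R z \<ge> R x + ereal (\<xi> \<bullet> (z - x))"
    proof (cases "z \<in> effdom R")
      case True then show ?thesis using a R_fin[of x] R_fin[OF True] by simp
    next
      case False then show ?thesis using not_effdom by simp
    qed
  qed
qed

lemma strong_subgrad:
  assumes "\<xi> \<in> subdiff R x" "z \<in> effdom R"
  shows "Rr z \<ge> Rr x + \<xi> \<bullet> (z - x) + \<sigma> * (norm (z - x))\<^sup>2"
proof (rule ccontr)
  assume "\<not> ?thesis"
  then have gap: "Rr z < Rr x + \<xi> \<bullet> (z - x) + \<sigma> * (norm (z - x))\<^sup>2" by simp
  have x: "x \<in> effdom R" and sub: "\<forall>w\<in>effdom R. Rr w \<ge> Rr x + \<xi> \<bullet> (w - x)"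
    using assms(1) subdiff_iff by auto
  define d where "d = (norm (z - x))\<^sup>2"
  define G where "G = Rr x + \<xi> \<bullet> (z - x) + \<sigma> * d - Rr z"
  have G: "G > 0" using gap unfolding G_def d_def by simp
  have d0: "d \<ge> 0" unfolding d_def by simp
  define t where "t = min 1 (G / (2 * \<sigma> * d + 1))"
  have "2 * \<sigma> * d \<ge> 0" using d0 sigma_pos by simp
  then have den: "2 * \<sigma> * d + 1 > 0" by linarith
  have t0: "t > 0" unfolding t_def using G den by simp
  have t1: "t \<le> 1" unfolding t_def by simp
  have "t * (2 * \<sigma> * d + 1) \<le> G"
  proof -
    have "t \<le> G / (2 * \<sigma> * d + 1)" unfolding t_def by simp
    then show ?thesis using den by (simp add: pos_le_divide_eq)
  qed
  moreover have "t * (2 * \<sigma> * d + 1) = 2 * (\<sigma> * t * d) + t" by (simp add: algebra_simps)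
  moreover have "\<sigma> * t * d \<ge> 0" using t0 sigma_pos d0 by simp
  ultimately have tsd: "\<sigma> * t * d < G" using t0 by linarith
  let ?w = "t *\<^sub>R z + (1 - t) *\<^sub>R x"
  have sc: "?w \<in> effdom R" "Rr ?w + \<sigma> * t * (1 - t) * d \<le> t * Rr z + (1 - t) * Rr x"
    using sc_real[OF assms(2) x, of t] t0 t1 unfolding d_def by auto
  have "Rr ?w \<ge> Rr x + \<xi> \<bullet> (?w - x)" using sub sc(1) by blast
  moreover have "?w - x = t *\<^sub>R (z - x)" by (simp add: algebra_simps)
  ultimately have "Rr ?w \<ge> Rr x + t * (\<xi> \<bullet> (z - x))" by simp
  with sc(2) have "t * (\<xi> \<bullet> (z - x)) + \<sigma> * t * (1 - t) * d \<le> t * (Rr z - Rr x)"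
    by (simp add: algebra_simps)
  then have "t * ((\<xi> \<bullet> (z - x)) + \<sigma> * (1 - t) * d) \<le> t * (Rr z - Rr x)"
    by (simp add: algebra_simps)
  then have "(\<xi> \<bullet> (z - x)) + \<sigma> * (1 - t) * d \<le> Rr z - Rr x"
    using t0 by simp
  then show False using tsd unfolding G_def by (simp add: algebra_simps)
qed

definition Phi where "Phi \<xi> x = Rr x - \<xi> \<bullet> x"

lemma Phi_lower: "z \<in> effdom R \<Longrightarrow> Phi \<xi> z \<ge> Rr x0 - \<xi> \<bullet> x0 - (norm (\<xi>0 - \<xi>))\<^sup>2 / (4 * \<sigma>)"
proof -
  assume z: "z \<in> effdom R"
  have s: "Rr z \<ge> Rr x0 + \<xi>0 \<bullet> (z - x0) + \<sigma> * (norm (z - x0))\<^sup>2"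
    using strong_subgrad[OF xi0 z] .
  have cs: "(\<xi>0 - \<xi>) \<bullet> (z - x0) \<ge> - norm (\<xi>0 - \<xi>) * norm (z - x0)"
    using Cauchy_Schwarz_ineq2[of "\<xi>0 - \<xi>" "z - x0"] by linarith
  have q: "- norm (\<xi>0 - \<xi>) * norm (z - x0) + \<sigma> * (norm (z - x0))\<^sup>2 \<ge> - (norm (\<xi>0 - \<xi>))\<^sup>2 / (4 * \<sigma>)"
  proof -
    have "0 \<le> (2 * \<sigma> * norm (z - x0) - norm (\<xi>0 - \<xi>))\<^sup>2" by simp
    then have "0 \<le> 4 * \<sigma> * (\<sigma> * (norm (z - x0))\<^sup>2 - norm (\<xi>0 - \<xi>) * norm (z - x0)) + (norm (\<xi>0 - \<xi>))\<^sup>2"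
      by (simp add: power2_eq_square algebra_simps)
    then show ?thesis using sigma_pos by (simp add: field_simps)
  qed
  have "Phi \<xi> z = Rr z - \<xi> \<bullet> z" unfolding Phi_def by simp
  also have "\<dots> \<ge> Rr x0 - \<xi> \<bullet> x0 + (\<xi>0 - \<xi>) \<bullet> (z - x0) + \<sigma> * (norm (z - x0))\<^sup>2"
    using s by (simp add: inner_diff_left inner_diff_right algebra_simps)
  finally show ?thesis using cs q by linarith
qed

lemma Phi_mid:
  assumes "a \<in> effdom R" "b \<in> effdom R"
  shows "(1/2) *\<^sub>R a + (1/2) *\<^sub>R b \<in> effdom R"
    "Phi \<xi> ((1/2) *\<^sub>R a + (1/2) *\<^sub>R b) + \<sigma> / 4 * (norm (a - b))\<^sup>2 \<le> Phi \<xi> a / 2 + Phi \<xi> b / 2"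
proof -
  have h: "(1/2) *\<^sub>R a + (1 - 1/2) *\<^sub>R b \<in> effdom R \<and>
    Rr ((1/2) *\<^sub>R a + (1 - 1/2) *\<^sub>R b) + \<sigma> * (1/2) * (1 - 1/2) * (norm (a - b))\<^sup>2 \<le> (1/2) * Rr a + (1 - 1/2) * Rr b"
    using sc_real[OF assms, of "1/2"] by simp
  then show "(1/2) *\<^sub>R a + (1/2) *\<^sub>R b \<in> effdom R" by simp
  have "\<xi> \<bullet> ((1/2) *\<^sub>R a + (1/2) *\<^sub>R b) = \<xi> \<bullet> a / 2 + \<xi> \<bullet> b / 2"
    by (simp add: inner_add_right)
  moreover have "Rr ((1/2) *\<^sub>R a + (1/2) *\<^sub>R b) + \<sigma> / 4 * (norm (a - b))\<^sup>2 \<le> Rr a / 2 + Rr b / 2"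
    using conjunct2[OF h] by simp
  ultimately show "Phi \<xi> ((1/2) *\<^sub>R a + (1/2) *\<^sub>R b) + \<sigma> / 4 * (norm (a - b))\<^sup>2 \<le> Phi \<xi> a / 2 + Phi \<xi> b / 2"
    unfolding Phi_def diff_divide_distrib by linarith
qed

lemma lsc_limit:
  assumes "xs \<longlonglongrightarrow> z" "eventually (\<lambda>k. xs k \<in> effdom R \<and> Rr (xs k) \<le> c) sequentially"
  shows "z \<in> effdom R \<and> Rr z \<le> c"
proof -
  have cl: "closed {x. R x \<le> ereal c}" using R_lsc unfolding lsc_fun_def by blast
  have "eventually (\<lambda>k. xs k \<in> {x. R x \<le> ereal c}) sequentially"
    using assms(2) by eventually_elim (auto simp: R_fin)
  then have "z \<in> {x. R x \<le> ereal c}"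
    using Lim_in_closed_set[OF cl _ _ assms(1)] by auto
  then have "R z \<le> ereal c" by simp
  then have "z \<in> effdom R" unfolding effdom_def by auto
  then show ?thesis using \<open>R z \<le> ereal c\<close> R_fin by auto
qed

end


context Rsetting begin

lemma min_exists:
  assumes C: "closed C" "convex C" and ne: "C \<inter> effdom R \<noteq> {}"
  shows "\<exists>x\<in>C \<inter> effdom R. \<forall>z\<in>C \<inter> effdom R. Phi \<xi> x \<le> Phi \<xi> z"
proof -
  define S where "S = Phi \<xi> ` (C \<inter> effdom R)"
  define lb where "lb = Rr x0 - \<xi> \<bullet> x0 - (norm (\<xi>0 - \<xi>))\<^sup>2 / (4 * \<sigma>)"
  have bdd: "bdd_below S" unfolding S_def bdd_below_def using Phi_lower unfolding lb_def by blast
  have Sne: "S \<noteq> {}" using ne unfolding S_def by auto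
  define m where "m = Inf S"
  have m_le: "\<And>z. z \<in> C \<inter> effdom R \<Longrightarrow> m \<le> Phi \<xi> z"
    unfolding m_def S_def using bdd S_def by (auto intro!: cInf_lower)
  have "\<forall>k::nat. \<exists>z\<in>C \<inter> effdom R. Phi \<xi> z < m + inverse (real (Suc k))"
  proof
    fix k :: nat
    have "Inf S < m + inverse (real (Suc k))" unfolding m_def by simp
    then obtain s where "s \<in> S" "s < m + inverse (real (Suc k))" using cInf_lessD[OF Sne] by blast
    then show "\<exists>z\<in>C \<inter> effdom R. Phi \<xi> z < m + inverse (real (Suc k))" unfolding S_def by auto
  qed
  then obtain zs where zsC: "\<And>k. zs k \<in> C \<inter> effdom R"
    and zsm: "\<And>k. Phi \<xi> (zs k) < m + inverse (real (Suc k))" by metis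
  have cauchy: "Cauchy zs"
  proof (rule metric_CauchyI)
    fix e :: real assume e: "e > 0"
    have "\<sigma> / 4 * e\<^sup>2 > 0" using e sigma_pos by simp
    then obtain M :: nat where M: "inverse (real (Suc M)) < \<sigma> / 4 * e\<^sup>2"
      using reals_Archimedean by blast
    have "\<forall>j\<ge>M. \<forall>k\<ge>M. dist (zs j) (zs k) < e"
    proof (intro allI impI)
      fix j k assume jk: "j \<ge> M" "k \<ge> M"
      have a: "zs j \<in> effdom R" "zs k \<in> effdom R" using zsC by auto
      let ?w = "(1/2) *\<^sub>R zs j + (1/2) *\<^sub>R zs k"
      have wC: "?w \<in> C" using convexD[of C "zs j" "zs k" "1/2" "1/2"] C(2) zsC by auto
      have w: "?w \<in> effdom R" using Phi_mid(1)[OF a] .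
      have ineq: "Phi \<xi> ?w + \<sigma> / 4 * (norm (zs j - zs k))\<^sup>2 \<le> Phi \<xi> (zs j) / 2 + Phi \<xi> (zs k) / 2"
        using Phi_mid(2)[OF a] .
      have "m \<le> Phi \<xi> ?w" using m_le wC w by blast
      have ij: "inverse (real (Suc j)) \<le> inverse (real (Suc M))" "inverse (real (Suc k)) \<le> inverse (real (Suc M))"
        using jk by (auto simp: field_simps)
      have "\<sigma> / 4 * (norm (zs j - zs k))\<^sup>2 < \<sigma> / 4 * e\<^sup>2"
        using ineq \<open>m \<le> Phi \<xi> ?w\<close> zsm[of j] zsm[of k] ij M by linarith
      then have "(norm (zs j - zs k))\<^sup>2 < e\<^sup>2" using sigma_pos by simp
      then have "norm (zs j - zs k) < e" using e by (smt (verit) power_mono norm_ge_zero)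
      then show "dist (zs j) (zs k) < e" by (simp add: dist_norm)
    qed
    then show "\<exists>M. \<forall>j\<ge>M. \<forall>k\<ge>M. dist (zs j) (zs k) < e" by blast
  qed
  then obtain z where z: "zs \<longlonglongrightarrow> z" using Cauchy_convergent_iff convergent_def by blast
  have zC: "z \<in> C" using closed_sequentially[OF C(1)] zsC z by blast
  have zeps: "z \<in> effdom R \<and> Phi \<xi> z \<le> m + e" if e: "e > 0" for e
  proof -
    have ev1: "eventually (\<lambda>k. \<xi> \<bullet> zs k < \<xi> \<bullet> z + e / 2) sequentially"
      using order_tendstoD(2)[OF tendsto_inner[OF tendsto_const z, of \<xi>]] e by simp
    have e2: "e / 2 > 0" using e by simp
    have ev2: "eventually (\<lambda>k. inverse (real (Suc k)) < e / 2) sequentially"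
      using order_tendstoD(2)[OF LIMSEQ_inverse_real_of_nat e2] .
    have "eventually (\<lambda>k. zs k \<in> effdom R \<and> Rr (zs k) \<le> m + \<xi> \<bullet> z + e) sequentially"
      using ev1 ev2
    proof eventually_elim
      case (elim k)
      then show ?case using zsC[of k] zsm[of k] unfolding Phi_def by auto
    qed
    from lsc_limit[OF z this] show ?thesis unfolding Phi_def by auto
  qed
  have zdom: "z \<in> effdom R" using zeps[of 1] by simp
  have "Phi \<xi> z \<le> m"
  proof (rule field_le_epsilon)
    fix e :: real assume "e > 0" then show "Phi \<xi> z \<le> m + e" using zeps by blast
  qed
  then show ?thesis using zC zdom m_le by (intro bexI[of _ z]) (auto, fastforce)
qed

lemma min_unique:
  assumes C: "convex C" and a: "a \<in> C \<inter> effdom R" and b: "b \<in> C \<inter> effdom R"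
    and am: "\<forall>z\<in>C \<inter> effdom R. Phi \<xi> a \<le> Phi \<xi> z"
    and bm: "\<forall>z\<in>C \<inter> effdom R. Phi \<xi> b \<le> Phi \<xi> z"
  shows "a = b"
proof -
  let ?w = "(1/2) *\<^sub>R a + (1/2) *\<^sub>R b"
  have ab: "a \<in> effdom R" "b \<in> effdom R" using a b by auto
  have wC: "?w \<in> C" using convexD[of C a b "1/2" "1/2"] C a b by auto
  have w: "?w \<in> effdom R" using Phi_mid(1)[OF ab] .
  have ineq: "Phi \<xi> ?w + \<sigma> / 4 * (norm (a - b))\<^sup>2 \<le> Phi \<xi> a / 2 + Phi \<xi> b / 2"
    using Phi_mid(2)[OF ab] .
  have "Phi \<xi> a \<le> Phi \<xi> ?w" "Phi \<xi> b \<le> Phi \<xi> ?w" using am bm wC w by auto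
  then have "\<sigma> / 4 * (norm (a - b))\<^sup>2 \<le> 0" using ineq by linarith
  then have "(norm (a - b))\<^sup>2 \<le> 0" using sigma_pos by (simp add: mult_le_0_iff)
  then show ?thesis by simp
qed

definition gR where "gR \<xi> = gradRstar R \<xi>"

lemma ereal_min_iff:
  assumes x: "x \<in> effdom R"
  shows "(\<forall>z. R x - ereal (\<xi> \<bullet> x) \<le> R z - ereal (\<xi> \<bullet> z)) \<longleftrightarrow> (\<forall>z\<in>effdom R. Phi \<xi> x \<le> Phi \<xi> z)"
proof
  assume h: "\<forall>z. R x - ereal (\<xi> \<bullet> x) \<le> R z - ereal (\<xi> \<bullet> z)"
  show "\<forall>z\<in>effdom R. Phi \<xi> x \<le> Phi \<xi> z"
  proof
    fix z assume z: "z \<in> effdom R"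
    from h[rule_format, of z] show "Phi \<xi> x \<le> Phi \<xi> z"
      using R_fin[OF x] R_fin[OF z] unfolding Phi_def by simp
  qed
next
  assume h: "\<forall>z\<in>effdom R. Phi \<xi> x \<le> Phi \<xi> z"
  show "\<forall>z. R x - ereal (\<xi> \<bullet> x) \<le> R z - ereal (\<xi> \<bullet> z)"
  proof
    fix z show "R x - ereal (\<xi> \<bullet> x) \<le> R z - ereal (\<xi> \<bullet> z)"
    proof (cases "z \<in> effdom R")
      case True then show ?thesis using h R_fin[OF x] R_fin[OF True] unfolding Phi_def by simp
    next
      case False then show ?thesis using not_effdom[OF False] R_fin[OF x] by simp
    qed
  qed
qed

lemma ereal_min_dom:
  assumes "\<forall>z. R x - ereal (\<xi> \<bullet> x) \<le> R z - ereal (\<xi> \<bullet> z)"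
  shows "x \<in> effdom R"
proof (rule ccontr)
  assume "x \<notin> effdom R"
  then have "R x = \<infinity>" using not_effdom by blast
  obtain z where "z \<in> effdom R" using effdom_ne by blast
  then show False using assms[rule_format, of z] \<open>R x = \<infinity>\<close> R_fin[of z] by simp
qed

lemma gR_prop: "gR \<xi> \<in> effdom R \<and> (\<forall>z\<in>effdom R. Phi \<xi> (gR \<xi>) \<le> Phi \<xi> z)"
proof -
  obtain x where x: "x \<in> effdom R" "\<forall>z\<in>effdom R. Phi \<xi> x \<le> Phi \<xi> z"
    using min_exists[of UNIV \<xi>] effdom_ne by auto
  have ex: "\<exists>!x. \<forall>z. R x - ereal (\<xi> \<bullet> x) \<le> R z - ereal (\<xi> \<bullet> z)"
  proof (rule ex1I[of _ x])
    show "\<forall>z. R x - ereal (\<xi> \<bullet> x) \<le> R z - ereal (\<xi> \<bullet> z)" using ereal_min_iff[OF x(1)] x(2) by blast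
  next
    fix x' assume h: "\<forall>z. R x' - ereal (\<xi> \<bullet> x') \<le> R z - ereal (\<xi> \<bullet> z)"
    have x': "x' \<in> effdom R" using ereal_min_dom[OF h] .
    show "x' = x" using min_unique[of UNIV x' x \<xi>] x' x ereal_min_iff[OF x'] h by auto
  qed
  have "\<forall>z. R (gR \<xi>) - ereal (\<xi> \<bullet> gR \<xi>) \<le> R z - ereal (\<xi> \<bullet> z)"
    unfolding gR_def gradRstar_def using theI'[OF ex] .
  then show ?thesis using ereal_min_dom ereal_min_iff by blast
qed

lemma gR_dom: "gR \<xi> \<in> effdom R" using gR_prop by blast

lemma subdiff_min: "\<xi> \<in> subdiff R x \<longleftrightarrow> x \<in> effdom R \<and> (\<forall>z\<in>effdom R. Phi \<xi> x \<le> Phi \<xi> z)"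
  unfolding subdiff_iff Phi_def by (auto simp: inner_diff_right algebra_simps)

lemma gR_subdiff: "\<xi> \<in> subdiff R (gR \<xi>)"
  using gR_prop subdiff_min by blast

lemma gR_eq: assumes "\<xi> \<in> subdiff R x" shows "gR \<xi> = x"
proof -
  have x: "x \<in> effdom R" "\<forall>z\<in>effdom R. Phi \<xi> x \<le> Phi \<xi> z" using assms subdiff_min by auto
  show ?thesis using min_unique[of UNIV "gR \<xi>" x \<xi>] gR_prop x by auto
qed

lemma gR_mono: "(\<xi>' - \<xi>) \<bullet> (gR \<xi>' - gR \<xi>) \<ge> 2 * \<sigma> * (norm (gR \<xi>' - gR \<xi>))\<^sup>2"
proof -
  have a: "Rr (gR \<xi>') \<ge> Rr (gR \<xi>) + \<xi> \<bullet> (gR \<xi>' - gR \<xi>) + \<sigma> * (norm (gR \<xi>' - gR \<xi>))\<^sup>2"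
    using strong_subgrad[OF gR_subdiff gR_dom] .
  have b: "Rr (gR \<xi>) \<ge> Rr (gR \<xi>') + \<xi>' \<bullet> (gR \<xi> - gR \<xi>') + \<sigma> * (norm (gR \<xi> - gR \<xi>'))\<^sup>2"
    using strong_subgrad[OF gR_subdiff gR_dom] .
  have "norm (gR \<xi> - gR \<xi>') = norm (gR \<xi>' - gR \<xi>)" by (rule norm_minus_commute)
  with a b show ?thesis by (simp add: inner_diff_left inner_diff_right algebra_simps)
qed

lemma gR_lip: "2 * \<sigma> * norm (gR \<xi>' - gR \<xi>) \<le> norm (\<xi>' - \<xi>)"
proof (cases "gR \<xi>' = gR \<xi>")
  case True then show ?thesis by simp
next
  case False
  then have pos: "norm (gR \<xi>' - gR \<xi>) > 0" by simp
  have "2 * \<sigma> * (norm (gR \<xi>' - gR \<xi>))\<^sup>2 \<le> norm (\<xi>' - \<xi>) * norm (gR \<xi>' - gR \<xi>)"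
    using gR_mono[of \<xi>' \<xi>] norm_cauchy_schwarz[of "\<xi>' - \<xi>" "gR \<xi>' - gR \<xi>"] by linarith
  then have "(2 * \<sigma> * norm (gR \<xi>' - gR \<xi>)) * norm (gR \<xi>' - gR \<xi>) \<le> norm (\<xi>' - \<xi>) * norm (gR \<xi>' - gR \<xi>)"
    by (simp add: power2_eq_square algebra_simps)
  then show ?thesis using pos by simp
qed

lemma gR_cont: "continuous_on UNIV gR"
proof -
  have "norm (gR \<xi>' - gR \<xi>) \<le> (1 / (2 * \<sigma>)) * norm (\<xi>' - \<xi>)" for \<xi>' \<xi>
    using gR_lip[of \<xi>' \<xi>] sigma_pos by (simp add: field_simps)
  then show ?thesis
    by (intro lipschitz_on_continuous_on[where L="1 / (2 * \<sigma>)"]) (use sigma_pos in \<open>auto simp: lipschitz_on_def dist_norm\<close>)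
qed

lemma gR_tendsto: "(f \<longlongrightarrow> \<xi>) F \<Longrightarrow> ((\<lambda>n. gR (f n)) \<longlongrightarrow> gR \<xi>) F"
  using gR_cont continuous_on_tendsto_compose[of UNIV gR f \<xi> F] by auto

definition breg where "breg \<xi> z x = Rr z - Rr x - \<xi> \<bullet> (z - x)"

lemma bregman_real: "z \<in> effdom R \<Longrightarrow> x \<in> effdom R \<Longrightarrow> bregman R \<xi> z x = ereal (breg \<xi> z x)"
  unfolding bregman_def breg_def using R_fin by simp

lemma breg_lower: "\<xi> \<in> subdiff R x \<Longrightarrow> z \<in> effdom R \<Longrightarrow> breg \<xi> z x \<ge> \<sigma> * (norm (z - x))\<^sup>2"
  using strong_subgrad unfolding breg_def by fastforce

lemma breg_gR_lower: "z \<in> effdom R \<Longrightarrow> breg \<xi> z (gR \<xi>) \<ge> \<sigma> * (norm (z - gR \<xi>))\<^sup>2"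
  using breg_lower gR_subdiff by blast

lemma breg_step:
  assumes z: "z \<in> effdom R"
  shows "breg \<xi>' z (gR \<xi>') - breg \<xi> z (gR \<xi>) \<le> (norm (\<xi>' - \<xi>))\<^sup>2 / (4 * \<sigma>) + (\<xi>' - \<xi>) \<bullet> (gR \<xi> - z)"
proof -
  let ?x = "gR \<xi>" and ?x' = "gR \<xi>'"
  have s: "Rr ?x' \<ge> Rr ?x + \<xi> \<bullet> (?x' - ?x) + \<sigma> * (norm (?x' - ?x))\<^sup>2"
    using strong_subgrad[OF gR_subdiff gR_dom] .
  have cs: "(\<xi>' - \<xi>) \<bullet> (?x' - ?x) \<le> norm (\<xi>' - \<xi>) * norm (?x' - ?x)"
    using norm_cauchy_schwarz by blast
  have q: "norm (\<xi>' - \<xi>) * norm (?x' - ?x) - \<sigma> * (norm (?x' - ?x))\<^sup>2 \<le> (norm (\<xi>' - \<xi>))\<^sup>2 / (4 * \<sigma>)"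
  proof -
    have "0 \<le> (2 * \<sigma> * norm (?x' - ?x) - norm (\<xi>' - \<xi>))\<^sup>2" by simp
    then have "0 \<le> 4 * \<sigma> * (\<sigma> * (norm (?x' - ?x))\<^sup>2 - norm (\<xi>' - \<xi>) * norm (?x' - ?x)) + (norm (\<xi>' - \<xi>))\<^sup>2"
      by (simp add: power2_eq_square algebra_simps)
    then show ?thesis using sigma_pos by (simp add: field_simps)
  qed
  have "breg \<xi>' z ?x' - breg \<xi> z ?x = Rr ?x - Rr ?x' - \<xi>' \<bullet> (z - ?x') + \<xi> \<bullet> (z - ?x)"
    unfolding breg_def by simp
  also have "\<dots> \<le> (\<xi>' - \<xi>) \<bullet> (?x' - ?x) - \<sigma> * (norm (?x' - ?x))\<^sup>2 + (\<xi>' - \<xi>) \<bullet> (?x - z)"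
    using s by (simp add: inner_diff_left inner_diff_right algebra_simps)
  finally show ?thesis using cs q by linarith
qed

definition hfun where "hfun \<xi> = Phi \<xi> (gR \<xi>)"

lemma hfun_lip: "\<bar>hfun \<xi>' - hfun \<xi>\<bar> \<le> norm (\<xi>' - \<xi>) * (norm (gR \<xi>) + norm (gR \<xi>'))"
proof -
  have a: "hfun \<xi>' \<le> Phi \<xi>' (gR \<xi>)" unfolding hfun_def using gR_prop gR_dom by blast
  have b: "hfun \<xi> \<le> Phi \<xi> (gR \<xi>')" unfolding hfun_def using gR_prop gR_dom by blast
  have a': "Phi \<xi>' (gR \<xi>) = hfun \<xi> - (\<xi>' - \<xi>) \<bullet> gR \<xi>" unfolding hfun_def Phi_def by (simp add: inner_diff_left)
  have b': "Phi \<xi> (gR \<xi>') = hfun \<xi>' + (\<xi>' - \<xi>) \<bullet> gR \<xi>'" unfolding hfun_def Phi_def by (simp add: inner_diff_left)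
  have c1: "\<bar>(\<xi>' - \<xi>) \<bullet> gR \<xi>\<bar> \<le> norm (\<xi>' - \<xi>) * norm (gR \<xi>)" by (rule Cauchy_Schwarz_ineq2)
  have c2: "\<bar>(\<xi>' - \<xi>) \<bullet> gR \<xi>'\<bar> \<le> norm (\<xi>' - \<xi>) * norm (gR \<xi>')" by (rule Cauchy_Schwarz_ineq2)
  have "0 \<le> norm (\<xi>' - \<xi>) * norm (gR \<xi>)" "0 \<le> norm (\<xi>' - \<xi>) * norm (gR \<xi>')" by simp_all
  then show ?thesis using a b a' b' c1 c2 by (simp add: abs_le_iff algebra_simps)
qed

lemma hfun_tendsto:
  assumes "(f \<longlongrightarrow> \<xi>) F"
  shows "((\<lambda>n. hfun (f n)) \<longlongrightarrow> hfun \<xi>) F"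
proof -
  have g: "((\<lambda>n. gR (f n)) \<longlongrightarrow> gR \<xi>) F" using gR_tendsto[OF assms] .
  have d: "((\<lambda>n. f n - \<xi>) \<longlongrightarrow> 0) F" using assms by (simp add: LIM_zero_iff)
  have nd: "((\<lambda>n. norm (f n - \<xi>)) \<longlongrightarrow> 0) F" using tendsto_norm_zero[OF d] .
  have s: "((\<lambda>n. norm (gR \<xi>) + norm (gR (f n))) \<longlongrightarrow> norm (gR \<xi>) + norm (gR \<xi>)) F"
    by (intro tendsto_add tendsto_const tendsto_norm g)
  have "((\<lambda>n. norm (f n - \<xi>) * (norm (gR \<xi>) + norm (gR (f n)))) \<longlongrightarrow> 0 * (norm (gR \<xi>) + norm (gR \<xi>))) F"
    using tendsto_mult[OF nd s] .
  then have z: "((\<lambda>n. norm (f n - \<xi>) * (norm (gR \<xi>) + norm (gR (f n)))) \<longlongrightarrow> 0) F" by simp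
  have "eventually (\<lambda>n. norm (hfun (f n) - hfun \<xi>) \<le> norm (f n - \<xi>) * (norm (gR \<xi>) + norm (gR (f n)))) F"
    by (intro always_eventually allI) (metis real_norm_def hfun_lip)
  from Lim_null_comparison[OF this z] have "((\<lambda>n. hfun (f n) - hfun \<xi>) \<longlongrightarrow> 0) F" .
  then show ?thesis by (simp add: LIM_zero_iff)
qed

lemma breg_as_h: "z \<in> effdom R \<Longrightarrow> breg \<xi> z (gR \<xi>) = Rr z - \<xi> \<bullet> z - hfun \<xi>"
  unfolding breg_def hfun_def Phi_def by (simp add: inner_diff_right)

lemma breg_tendsto:
  assumes "(f \<longlongrightarrow> \<xi>) F" "z \<in> effdom R"
  shows "((\<lambda>n. breg (f n) z (gR (f n))) \<longlongrightarrow> breg \<xi> z (gR \<xi>)) F"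
  unfolding breg_as_h[OF assms(2)]
  by (intro tendsto_intros hfun_tendsto assms(1))

end


lemma parallel_mid:
  fixes a b :: "'a::real_inner"
  shows "(norm a)\<^sup>2 + (norm b)\<^sup>2 - 2 * (norm ((1/2) *\<^sub>R a + (1/2) *\<^sub>R b))\<^sup>2 = (norm (a - b))\<^sup>2 / 2"
  by (simp add: power2_norm_eq_inner inner_add_left inner_add_right inner_diff_left inner_diff_right
      inner_commute algebra_simps)

lemma riesz:
  fixes f :: "'a::{real_inner,complete_space} \<Rightarrow> real"
  assumes bl: "bounded_linear f"
  shows "\<exists>w. \<forall>v. f v = w \<bullet> v"
proof -
  obtain K where K: "K > 0" "\<And>x. norm (f x) \<le> norm x * K"
    using bounded_linear.pos_bounded[OF bl] by blast
  define J where "J x = (norm x)\<^sup>2 - 2 * f x" for x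
  have Jlow: "J x \<ge> - K\<^sup>2" for x
  proof -
    have "f x \<le> norm x * K" using K(2)[of x] by simp
    moreover have "0 \<le> (norm x - K)\<^sup>2" by simp
    ultimately show ?thesis unfolding J_def by (simp add: power2_eq_square algebra_simps)
  qed
  have lin: "f ((1/2) *\<^sub>R a + (1/2) *\<^sub>R b) = f a / 2 + f b / 2" for a b
    using bl by (simp add: linear_add linear_scale bounded_linear.linear linear_simps)
  have Jmid: "J a / 2 + J b / 2 - J ((1/2) *\<^sub>R a + (1/2) *\<^sub>R b) = (norm (a - b))\<^sup>2 / 4" for a b
    using parallel_mid[of a b] lin[of a b] unfolding J_def by (simp add: field_simps)
  define S where "S = range J"
  have bdd: "bdd_below S" unfolding S_def bdd_below_def using Jlow by blast
  define m where "m = Inf S"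
  have m_le: "m \<le> J z" for z unfolding m_def S_def using bdd S_def by (auto intro!: cInf_lower)
  have "\<forall>k::nat. \<exists>z. J z < m + inverse (real (Suc k))"
  proof
    fix k :: nat
    have "Inf S < m + inverse (real (Suc k))" unfolding m_def by simp
    then obtain s where "s \<in> S" "s < m + inverse (real (Suc k))" using cInf_lessD[of S] S_def by blast
    then show "\<exists>z. J z < m + inverse (real (Suc k))" unfolding S_def by auto
  qed
  then obtain zs where zsm: "\<And>k. J (zs k) < m + inverse (real (Suc k))" by metis
  have cauchy: "Cauchy zs"
  proof (rule metric_CauchyI)
    fix e :: real assume e: "e > 0"
    have "e\<^sup>2 / 4 > 0" using e by simp
    then obtain M :: nat where M: "inverse (real (Suc M)) < e\<^sup>2 / 4"
      using reals_Archimedean by blast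
    have "\<forall>j\<ge>M. \<forall>k\<ge>M. dist (zs j) (zs k) < e"
    proof (intro allI impI)
      fix j k assume jk: "j \<ge> M" "k \<ge> M"
      have ij: "inverse (real (Suc j)) \<le> inverse (real (Suc M))" "inverse (real (Suc k)) \<le> inverse (real (Suc M))"
        using jk by (auto simp: field_simps)
      have "(norm (zs j - zs k))\<^sup>2 / 4 < e\<^sup>2 / 4"
        using Jmid[of "zs j" "zs k"] m_le[of "(1/2) *\<^sub>R zs j + (1/2) *\<^sub>R zs k"] zsm[of j] zsm[of k] ij M
        by linarith
      then have "(norm (zs j - zs k))\<^sup>2 < e\<^sup>2" by simp
      then have "norm (zs j - zs k) < e" using e by (smt (verit) power_mono norm_ge_zero)
      then show "dist (zs j) (zs k) < e" by (simp add: dist_norm)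
    qed
    then show "\<exists>M. \<forall>j\<ge>M. \<forall>k\<ge>M. dist (zs j) (zs k) < e" by blast
  qed
  then obtain w where w: "zs \<longlonglongrightarrow> w" using Cauchy_convergent_iff convergent_def by blast
  have Jcont: "(\<lambda>k. J (zs k)) \<longlonglongrightarrow> J w"
    unfolding J_def by (intro tendsto_intros w bounded_linear.tendsto[OF bl])
  have "J w \<le> m"
  proof (rule LIMSEQ_le[OF Jcont])
    show "(\<lambda>k. m + inverse (real (Suc k))) \<longlonglongrightarrow> m"
      using tendsto_add[OF tendsto_const LIMSEQ_inverse_real_of_nat, of m] by simp
    show "\<exists>N. \<forall>n\<ge>N. J (zs n) \<le> m + inverse (real (Suc n))" using zsm less_imp_le by blast
  qed
  then have wmin: "J w \<le> J z" for z using m_le[of z] by linarith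
  have "f v = w \<bullet> v" for v
  proof (rule ccontr)
    assume ne: "f v \<noteq> w \<bullet> v"
    define c where "c = w \<bullet> v - f v"
    define n where "n = (norm v)\<^sup>2"
    have c0: "c \<noteq> 0" using ne unfolding c_def by simp
    have n0: "n \<ge> 0" unfolding n_def by simp
    define s where "s = n + 1"
    have s0: "s > 0" using n0 unfolding s_def by simp
    define t where "t = - c / s"
    have fl: "f (w + t *\<^sub>R v) = f w + t * f v"
      using bl by (simp add: linear_simps bounded_linear.linear)
    have nn: "(norm (w + t *\<^sub>R v))\<^sup>2 = (norm w)\<^sup>2 + 2 * t * (w \<bullet> v) + t\<^sup>2 * (norm v)\<^sup>2"
      unfolding power2_norm_eq_inner by (simp add: inner_add_left inner_add_right inner_commute algebra_simps power2_eq_square)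
    have "J (w + t *\<^sub>R v) = J w + (2 * t * c + t\<^sup>2 * n)"
      unfolding J_def c_def n_def fl nn by (simp add: algebra_simps)
    also have "2 * t * c + t\<^sup>2 * n = c\<^sup>2 * (n - 2 * s) / s\<^sup>2"
      unfolding t_def using s0 by (simp add: field_simps power2_eq_square)
    also have "\<dots> < 0"
    proof -
      have "c\<^sup>2 > 0" using c0 by simp
      moreover have "n - 2 * s < 0" using n0 unfolding s_def by simp
      ultimately have "c\<^sup>2 * (n - 2 * s) < 0" by (simp add: mult_pos_neg)
      then show ?thesis using s0 by (simp add: divide_neg_pos)
    qed
    finally show False using wmin[of "w + t *\<^sub>R v"] by linarith
  qed
  then show ?thesis by blast
qed

lemma adjoint_exists:
  fixes A :: "'a::{real_inner,complete_space} \<Rightarrow>\<^sub>L 'b::real_inner"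
  shows "\<exists>f'. \<forall>x y. A x \<bullet> y = x \<bullet> f' y"
proof -
  have "\<forall>y. \<exists>w. \<forall>x. A x \<bullet> y = w \<bullet> x"
  proof
    fix y
    have "bounded_linear (\<lambda>x. A x \<bullet> y)"
      using bounded_linear_compose[OF bounded_linear_inner_left blinfun.bounded_linear_right] by blast
    then show "\<exists>w. \<forall>x. A x \<bullet> y = w \<bullet> x" using riesz by blast
  qed
  then obtain g where "\<forall>y x. A x \<bullet> y = g y \<bullet> x" by metis
  then show ?thesis by (metis inner_commute)
qed

lemma adjoint_prop:
  fixes A :: "'a::{real_inner,complete_space} \<Rightarrow>\<^sub>L 'b::real_inner"
  shows "A x \<bullet> y = x \<bullet> adjoint (blinfun_apply A) y"
proof -
  have "\<forall>x y. A x \<bullet> y = x \<bullet> adjoint (blinfun_apply A) y"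
    unfolding adjoint_def using someI_ex[OF adjoint_exists[of A]] .
  then show ?thesis by blast
qed

lemma adjoint_diff_bound:
  fixes A B :: "'a::{real_inner,complete_space} \<Rightarrow>\<^sub>L 'b::real_inner"
  shows "norm (adjoint (blinfun_apply A) y - adjoint (blinfun_apply B) y') \<le> norm (A - B) * norm y + norm B * norm (y - y')"
proof -
  define u where "u = adjoint (blinfun_apply A) y - adjoint (blinfun_apply B) y'"
  have "(norm u)\<^sup>2 = u \<bullet> adjoint (blinfun_apply A) y - u \<bullet> adjoint (blinfun_apply B) y'"
    unfolding u_def by (simp add: power2_norm_eq_inner inner_diff_right inner_diff_left)
  also have "\<dots> = A u \<bullet> y - B u \<bullet> y'" by (simp add: adjoint_prop)
  also have "\<dots> = (A - B) u \<bullet> y + B u \<bullet> (y - y')"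
    by (simp add: blinfun.diff_left inner_diff_left inner_diff_right)
  also have "\<dots> \<le> norm ((A - B) u) * norm y + norm (B u) * norm (y - y')"
    using norm_cauchy_schwarz add_mono by blast
  also have "\<dots> \<le> (norm (A - B) * norm u) * norm y + (norm B * norm u) * norm (y - y')"
    by (intro add_mono mult_right_mono norm_blinfun) auto
  finally have h: "norm u * norm u \<le> norm u * (norm (A - B) * norm y + norm B * norm (y - y'))"
    by (simp add: power2_eq_square algebra_simps)
  show ?thesis
  proof (cases "norm u = 0")
    case True then show ?thesis unfolding u_def by (simp add: True)
  next
    case False then have "norm u > 0" by simp
    with h show ?thesis unfolding u_def by simp
  qed
qed

lemma adjoint_bound:
  fixes A :: "'a::{real_inner,complete_space} \<Rightarrow>\<^sub>L 'b::real_inner"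
  shows "norm (adjoint (blinfun_apply A) y) \<le> norm A * norm y"
proof -
  have "adjoint (blinfun_apply (0::'a \<Rightarrow>\<^sub>L 'b)) 0 \<bullet> adjoint (blinfun_apply (0::'a \<Rightarrow>\<^sub>L 'b)) 0 = 0"
    using adjoint_prop[of "0::'a \<Rightarrow>\<^sub>L 'b" "adjoint (blinfun_apply (0::'a \<Rightarrow>\<^sub>L 'b)) 0" 0] by simp
  then have "adjoint (blinfun_apply (0::'a \<Rightarrow>\<^sub>L 'b)) 0 = 0" by simp
  then show ?thesis using adjoint_diff_bound[of A y 0 0] by simp
qed


lemma stepsize_props:
  fixes nr ng Lc \<mu>0 \<mu>1 :: real and ad ex :: bool
  assumes "0 \<le> nr" "0 \<le> ng" "ng \<le> Lc * nr" "Lc > 0" "\<mu>0 > 0" "\<mu>1 > 0"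
  defines "s \<equiv> stepsize ad ex \<mu>0 \<mu>1 Lc nr ng"
  shows "0 \<le> s" "s \<le> max (\<mu>0 / Lc\<^sup>2) \<mu>1" "s * ng\<^sup>2 \<le> \<mu>0 * nr\<^sup>2"
    "nr \<noteq> 0 \<Longrightarrow> min (\<mu>0 / Lc\<^sup>2) \<mu>1 \<le> s"
proof -
  have ng2: "ng\<^sup>2 \<le> Lc\<^sup>2 * nr\<^sup>2"
    using power_mono[OF assms(3) assms(2)] by (simp add: power_mult_distrib)
  show "0 \<le> s" unfolding s_def stepsize_def using assms by auto
  show "s \<le> max (\<mu>0 / Lc\<^sup>2) \<mu>1" unfolding s_def stepsize_def using assms by auto
  show "s * ng\<^sup>2 \<le> \<mu>0 * nr\<^sup>2"
  proof -
    consider (c1) "\<not> ad" | (c2) "ad" "ex \<and> nr = 0" | (c3) "ad" "\<not> (ex \<and> nr = 0)" "ng = 0"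
      | (c4) "ad" "\<not> (ex \<and> nr = 0)" "ng \<noteq> 0" by blast
    then show ?thesis
    proof cases
      case c1
      then have s: "s = \<mu>0 / Lc\<^sup>2" unfolding s_def stepsize_def by simp
      then have s0: "s \<ge> 0" using assms by simp
      have "s * ng\<^sup>2 \<le> s * (Lc\<^sup>2 * nr\<^sup>2)" using mult_left_mono[OF ng2 s0] .
      also have "\<dots> = \<mu>0 * nr\<^sup>2" using s assms by simp
      finally show ?thesis .
    next
      case c2 then show ?thesis unfolding s_def stepsize_def using assms by simp
    next
      case c3 then show ?thesis unfolding s_def stepsize_def using assms by simp
    next
      case c4
      then have "s = min (\<mu>0 * nr\<^sup>2 / ng\<^sup>2) \<mu>1" unfolding s_def stepsize_def by auto
      then have "s \<le> \<mu>0 * nr\<^sup>2 / ng\<^sup>2" by simp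
      then show ?thesis using c4 by (simp add: field_simps)
    qed
  qed
  show "min (\<mu>0 / Lc\<^sup>2) \<mu>1 \<le> s" if nr: "nr \<noteq> 0"
  proof -
    consider (c1) "\<not> ad" | (c3) "ad" "ng = 0" | (c4) "ad" "ng \<noteq> 0" by blast
    then show ?thesis
    proof cases
      case c1 then show ?thesis unfolding s_def stepsize_def by simp
    next
      case c3 then show ?thesis unfolding s_def stepsize_def using nr by simp
    next
      case c4
      then have s: "s = min (\<mu>0 * nr\<^sup>2 / ng\<^sup>2) \<mu>1" unfolding s_def stepsize_def using nr by simp
      have "\<mu>0 / Lc\<^sup>2 \<le> \<mu>0 * nr\<^sup>2 / ng\<^sup>2"
        using ng2 c4 assms by (simp add: field_simps)
      then show ?thesis using s by simp
    qed
  qed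
qed

lemma momentum_props:
  fixes bb \<sigma> \<alpha> \<gamma> :: real and g m :: "'a::real_inner"
  assumes "0 \<le> bb"
  defines "b \<equiv> momentum bb \<sigma> \<alpha> \<gamma> g m"
  shows "0 \<le> b" "b \<le> bb" "b > 0 \<Longrightarrow> m \<noteq> 0 \<and> b * (norm m)\<^sup>2 \<le> \<alpha> * (g \<bullet> m) - 2 * \<sigma> * \<gamma>"
    "m = 0 \<Longrightarrow> b = 0"
proof -
  show "0 \<le> b" unfolding b_def momentum_def using assms by auto
  show "b \<le> bb" unfolding b_def momentum_def using assms by auto
  show "m = 0 \<Longrightarrow> b = 0" unfolding b_def momentum_def by simp
  show "m \<noteq> 0 \<and> b * (norm m)\<^sup>2 \<le> \<alpha> * (g \<bullet> m) - 2 * \<sigma> * \<gamma>" if bp: "b > 0"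
  proof -
    have m: "m \<noteq> 0" using bp unfolding b_def momentum_def by (auto split: if_splits)
    then have b: "b = min (max 0 ((\<alpha> * (g \<bullet> m) - 2 * \<sigma> * \<gamma>) / (norm m)\<^sup>2)) bb"
      unfolding b_def momentum_def by simp
    then have "b \<le> (\<alpha> * (g \<bullet> m) - 2 * \<sigma> * \<gamma>) / (norm m)\<^sup>2" using bp by linarith
    then show ?thesis using m by (simp add: field_simps)
  qed
qed

locale TS = Rsetting R \<sigma> x0 \<xi>0
  for R :: "'a::{real_inner,complete_space} \<Rightarrow> ereal" and \<sigma> x0 \<xi>0 +
  fixes F :: "'a \<Rightarrow> 'b::{real_inner,complete_space}" and L :: "'a \<Rightarrow> ('a \<Rightarrow>\<^sub>L 'b)"
    and \<rho> \<eta> Lc :: real and y :: 'b and xb :: 'a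
  assumes rho_pos: "\<rho> > 0"
    and L_cont: "continuous_on (cball x0 (2 * \<rho>)) L"
    and eta: "0 \<le> \<eta>" "\<eta> < 1"
    and tangential: "\<And>x x'. x \<in> cball x0 (2 * \<rho>) \<Longrightarrow> x' \<in> cball x0 (2 * \<rho>) \<Longrightarrow>
           norm (F x - F x' - L x' (x - x')) \<le> \<eta> * norm (F x - F x')"
    and Lc_pos: "Lc > 0" and L_bound: "\<And>x. x \<in> cball x0 (2 * \<rho>) \<Longrightarrow> norm (L x) \<le> Lc"
    and xb_dom: "xb \<in> effdom R" and xb_sol: "F xb = y" and xb_breg: "breg \<xi>0 xb x0 \<le> \<sigma> * \<rho>\<^sup>2"
begin

abbreviation "BB \<equiv> cball x0 (2 * \<rho>)"

lemma x0_dom: "x0 \<in> effdom R" using xi0 subdiff_iff by blast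

lemma xb_near: "norm (xb - x0) \<le> \<rho>"
proof -
  have "\<sigma> * (norm (xb - x0))\<^sup>2 \<le> \<sigma> * \<rho>\<^sup>2" using breg_lower[OF xi0 xb_dom] xb_breg by linarith
  then have "(norm (xb - x0))\<^sup>2 \<le> \<rho>\<^sup>2" using sigma_pos by simp
  then show ?thesis using rho_pos by (simp add: power2_le_iff_abs_le)
qed

lemma near_xb_in_BB: "norm (x - xb) \<le> \<rho> \<Longrightarrow> x \<in> BB"
  using xb_near norm_triangle_ineq[of "x - xb" "xb - x0"] unfolding mem_cball dist_norm
  by (simp add: norm_minus_commute)

lemma xb_BB: "xb \<in> BB" using near_xb_in_BB[of xb] rho_pos by simp

lemma T1: "x \<in> BB \<Longrightarrow> x' \<in> BB \<Longrightarrow> norm (L x' (x - x')) \<le> (1 + \<eta>) * norm (F x - F x')"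
proof -
  assume a: "x \<in> BB" "x' \<in> BB"
  have t: "norm (F x - F x' - L x' (x - x')) \<le> \<eta> * norm (F x - F x')" using tangential[OF a] .
  have "L x' (x - x') = (F x - F x') - (F x - F x' - L x' (x - x'))" by simp
  then have "norm (L x' (x - x')) \<le> norm (F x - F x') + norm (F x - F x' - L x' (x - x'))"
    by (metis norm_triangle_ineq4)
  then show ?thesis using t by (simp add: algebra_simps)
qed

lemma T2: "x \<in> BB \<Longrightarrow> x' \<in> BB \<Longrightarrow> (1 - \<eta>) * norm (F x - F x') \<le> norm (L x' (x - x'))"
proof -
  assume a: "x \<in> BB" "x' \<in> BB"
  have t: "norm (F x - F x' - L x' (x - x')) \<le> \<eta> * norm (F x - F x')" using tangential[OF a] .
  have "F x - F x' = L x' (x - x') + (F x - F x' - L x' (x - x'))" by simp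
  then have "norm (F x - F x') \<le> norm (L x' (x - x')) + norm (F x - F x' - L x' (x - x'))"
    by (metis norm_triangle_ineq)
  then show ?thesis using t by (simp add: algebra_simps)
qed

lemma F_lip: "x \<in> BB \<Longrightarrow> x' \<in> BB \<Longrightarrow> norm (F x - F x') \<le> Lc / (1 - \<eta>) * norm (x - x')"
proof -
  assume a: "x \<in> BB" "x' \<in> BB"
  have "(1 - \<eta>) * norm (F x - F x') \<le> norm (L x' (x - x'))" using T2[OF a] .
  also have "\<dots> \<le> norm (L x') * norm (x - x')" by (rule norm_blinfun)
  also have "\<dots> \<le> Lc * norm (x - x')" using L_bound[OF a(2)] by (simp add: mult_right_mono)
  finally show ?thesis using eta by (simp add: field_simps)
qed

lemma F_cont: "continuous_on BB F"
proof -
  have "Lc / (1 - \<eta>) \<ge> 0" using Lc_pos eta by simp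
  then show ?thesis
  proof (intro lipschitz_on_continuous_on[where L="Lc / (1 - \<eta>)"])
    show "(Lc / (1 - \<eta>))-lipschitz_on BB F"
      unfolding lipschitz_on_def dist_norm using F_lip \<open>Lc / (1 - \<eta>) \<ge> 0\<close> by blast
  qed
qed

lemma T3:
  assumes x: "x \<in> BB" and xh: "xh \<in> BB" "F xh = y" and yd: "norm (yd - y) \<le> d"
  shows "(x - xh) \<bullet> adjoint (blinfun_apply (L x)) (F x - yd) \<ge>
     (1 - \<eta>) * (norm (F x - yd))\<^sup>2 - (1 + \<eta>) * d * norm (F x - yd)"
proof -
  define r where "r = F x - yd"
  define e where "e = F xh - F x - L x (xh - x)"
  have e: "norm e \<le> \<eta> * norm (F xh - F x)" unfolding e_def using tangential[OF xh(1) x] .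
  have Lx: "L x (x - xh) = r + (yd - y) + e"
    unfolding e_def r_def using xh(2) by (simp add: blinfun.diff_right algebra_simps)
  have "(x - xh) \<bullet> adjoint (blinfun_apply (L x)) r = L x (x - xh) \<bullet> r" by (simp add: adjoint_prop)
  also have "\<dots> = (norm r)\<^sup>2 + (yd - y) \<bullet> r + e \<bullet> r"
    unfolding Lx by (simp add: inner_add_left power2_norm_eq_inner)
  finally have eq: "(x - xh) \<bullet> adjoint (blinfun_apply (L x)) r = (norm r)\<^sup>2 + (yd - y) \<bullet> r + e \<bullet> r" .
  have c1: "(yd - y) \<bullet> r \<ge> - d * norm r"
    using Cauchy_Schwarz_ineq2[of "yd - y" r] yd mult_right_mono[OF yd, of "norm r"] by (simp; linarith)
  have Fd: "norm (F xh - F x) \<le> norm r + d"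
    using xh(2) yd norm_triangle_ineq[of "F x - yd" "yd - y"] unfolding r_def
    by (simp add: norm_minus_commute algebra_simps)
  have en: "norm e \<le> \<eta> * (norm r + d)" using e Fd eta mult_left_mono order_trans by blast
  have c2: "e \<bullet> r \<ge> - (\<eta> * (norm r + d)) * norm r"
    using Cauchy_Schwarz_ineq2[of e r] mult_right_mono[OF en, of "norm r"] by (simp; linarith)
  have "(norm r)\<^sup>2 + (yd - y) \<bullet> r + e \<bullet> r \<ge> (1 - \<eta>) * (norm r)\<^sup>2 - (1 + \<eta>) * d * norm r"
    using c1 c2 by (simp add: algebra_simps power2_eq_square)
  then show ?thesis using eq unfolding r_def by simp
qed

lemma T4: "x \<in> BB \<Longrightarrow> norm (adjoint (blinfun_apply (L x)) r) \<le> Lc * norm r"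
  using adjoint_bound[of "L x" r] L_bound[of x] mult_right_mono[of "norm (L x)" Lc "norm r"]
  by (meson norm_ge_zero order_trans)

end


locale Alg = TS R \<sigma> x0 \<xi>0 F L \<rho> \<eta> Lc y xb
  for R :: "'a::{real_inner,complete_space} \<Rightarrow> ereal" and \<sigma> x0 \<xi>0
    and F :: "'a \<Rightarrow> 'b::{real_inner,complete_space}" and L \<rho> \<eta> Lc y xb +
  fixes \<beta> \<mu>0 \<mu>1 \<tau> :: real and adaptive :: bool
  assumes beta: "0 \<le> \<beta>" "\<beta> < 1" and tau: "\<tau> > 1" and mu0: "\<mu>0 > 0" and mu1: "\<mu>1 > 0"
    and param: "1 - (1 + \<eta>) / \<tau> - \<eta> - \<mu>0 / (4 * \<sigma>) > 0"
begin

definition "IT ex d yd n = iter R F L Lc \<eta> \<sigma> \<beta> \<mu>0 \<mu>1 adaptive ex \<xi>0 d yd n"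
definition "XI ex d yd n = fst (snd (IT ex d yd n))"
definition "XP ex d yd n = fst (IT ex d yd n)"
definition "GAM ex d yd n = snd (snd (IT ex d yd n))"
definition "X ex d yd n = gR (XI ex d yd n)"
definition "RS ex d yd n = F (X ex d yd n) - yd"
definition "GD ex d yd n = adjoint (blinfun_apply (L (X ex d yd n))) (RS ex d yd n)"
definition "AL ex d yd n = stepsize adaptive ex \<mu>0 \<mu>1 Lc (norm (RS ex d yd n)) (norm (GD ex d yd n))"
definition "MM ex d yd n = XI ex d yd n - XP ex d yd n"
definition "BT ex d yd n = momentum \<beta> \<sigma> (AL ex d yd n) (GAM ex d yd n) (GD ex d yd n) (MM ex d yd n)"

definition "c0 = 1 - (1 + \<eta>) / \<tau> - \<eta> - \<mu>0 / (4 * \<sigma>)"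
definition "Amin = min (\<mu>0 / Lc\<^sup>2) \<mu>1"
definition "Amax = max (\<mu>0 / Lc\<^sup>2) \<mu>1"

lemma c0_pos: "c0 > 0" using param unfolding c0_def by simp
lemma Amin_pos: "Amin > 0" unfolding Amin_def using mu0 mu1 Lc_pos by simp

lemma iter_x_eq: "iter_x R F L Lc \<eta> \<sigma> \<beta> \<mu>0 \<mu>1 adaptive ex \<xi>0 d yd n = X ex d yd n"
  unfolding iter_x_def iter_xi_def X_def XI_def IT_def gR_def by simp

lemma iter_xi_eq: "iter_xi R F L Lc \<eta> \<sigma> \<beta> \<mu>0 \<mu>1 adaptive ex \<xi>0 d yd n = XI ex d yd n"
  unfolding iter_xi_def XI_def IT_def by simp

lemma IT_0: "XI ex d yd 0 = \<xi>0" "XP ex d yd 0 = \<xi>0" "GAM ex d yd 0 = 0"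
  unfolding XI_def XP_def GAM_def IT_def by simp_all

lemma IT_Suc:
  "XP ex d yd (Suc n) = XI ex d yd n"
  "XI ex d yd (Suc n) = XI ex d yd n - AL ex d yd n *\<^sub>R GD ex d yd n + BT ex d yd n *\<^sub>R MM ex d yd n"
  "GAM ex d yd (Suc n) = (XI ex d yd (Suc n) - XI ex d yd n) \<bullet> (X ex d yd (Suc n) - X ex d yd n)
      - (1 - \<eta>) * AL ex d yd n * (norm (RS ex d yd n))\<^sup>2 + (1 + \<eta>) * AL ex d yd n * d * norm (RS ex d yd n)
      + BT ex d yd n * GAM ex d yd n"
proof -
  obtain a b c where abc: "IT ex d yd n = (a, b, c)" by (cases "IT ex d yd n") auto
  have XIn: "XI ex d yd n = b" "XP ex d yd n = a" "GAM ex d yd n = c" unfolding XI_def XP_def GAM_def abc by simp_all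
  have IS: "IT ex d yd (Suc n) = iter R F L Lc \<eta> \<sigma> \<beta> \<mu>0 \<mu>1 adaptive ex \<xi>0 d yd (Suc n)" unfolding IT_def ..
  have ab: "iter R F L Lc \<eta> \<sigma> \<beta> \<mu>0 \<mu>1 adaptive ex \<xi>0 d yd n = (a, b, c)" using abc unfolding IT_def .
  show "XP ex d yd (Suc n) = XI ex d yd n"
    unfolding XP_def IS using ab XIn by (simp add: Let_def)
  show xi: "XI ex d yd (Suc n) = XI ex d yd n - AL ex d yd n *\<^sub>R GD ex d yd n + BT ex d yd n *\<^sub>R MM ex d yd n"
    unfolding XI_def[of ex d yd "Suc n"] IS using ab XIn
    by (simp add: Let_def AL_def GD_def RS_def X_def BT_def MM_def gR_def)
  show "GAM ex d yd (Suc n) = (XI ex d yd (Suc n) - XI ex d yd n) \<bullet> (X ex d yd (Suc n) - X ex d yd n)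
      - (1 - \<eta>) * AL ex d yd n * (norm (RS ex d yd n))\<^sup>2 + (1 + \<eta>) * AL ex d yd n * d * norm (RS ex d yd n)
      + BT ex d yd n * GAM ex d yd n"
    unfolding GAM_def[of ex d yd "Suc n"] X_def[of ex d yd "Suc n"] xi IS using ab XIn
    by (simp add: Let_def AL_def GD_def RS_def X_def BT_def MM_def gR_def)
qed

lemma M_0: "MM ex d yd 0 = 0" unfolding MM_def IT_0 by simp

lemma M_Suc: "MM ex d yd (Suc n) = - AL ex d yd n *\<^sub>R GD ex d yd n + BT ex d yd n *\<^sub>R MM ex d yd n"
  unfolding MM_def IT_Suc by simp

lemma M_Suc': "MM ex d yd (Suc n) = XI ex d yd (Suc n) - XI ex d yd n"
  unfolding MM_def IT_Suc by simp

lemma X_0: "X ex d yd 0 = x0" unfolding X_def IT_0 using gR_eq[OF xi0] .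

lemma X_dom: "X ex d yd n \<in> effdom R" unfolding X_def using gR_dom .

lemma XI_subdiff: "XI ex d yd n \<in> subdiff R (X ex d yd n)" unfolding X_def using gR_subdiff .

lemma G_bound: "X ex d yd n \<in> BB \<Longrightarrow> norm (GD ex d yd n) \<le> Lc * norm (RS ex d yd n)"
  unfolding GD_def using T4 by blast

lemma AL_props:
  assumes "X ex d yd n \<in> BB"
  shows "0 \<le> AL ex d yd n" "AL ex d yd n \<le> Amax"
    "AL ex d yd n * (norm (GD ex d yd n))\<^sup>2 \<le> \<mu>0 * (norm (RS ex d yd n))\<^sup>2"
    "RS ex d yd n \<noteq> 0 \<Longrightarrow> Amin \<le> AL ex d yd n"
  using stepsize_props[of "norm (RS ex d yd n)" "norm (GD ex d yd n)" Lc \<mu>0 \<mu>1 adaptive ex]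
    G_bound[OF assms] Lc_pos mu0 mu1 unfolding AL_def Amax_def Amin_def by auto

lemma AL_nonneg: "0 \<le> AL ex d yd n"
  unfolding AL_def stepsize_def using mu0 mu1 Lc_pos by auto

lemma AL_le: "AL ex d yd n \<le> Amax"
  unfolding AL_def stepsize_def Amax_def using mu0 mu1 Lc_pos by auto

lemma BT_props:
  "0 \<le> BT ex d yd n" "BT ex d yd n \<le> \<beta>"
  "BT ex d yd n > 0 \<Longrightarrow> MM ex d yd n \<noteq> 0 \<and>
     BT ex d yd n * (norm (MM ex d yd n))\<^sup>2 \<le> AL ex d yd n * (GD ex d yd n \<bullet> MM ex d yd n) - 2 * \<sigma> * GAM ex d yd n"
  "MM ex d yd n = 0 \<Longrightarrow> BT ex d yd n = 0"
  using momentum_props[OF beta(1), where \<sigma>=\<sigma> and \<alpha>="AL ex d yd n" and \<gamma>="GAM ex d yd n" and g="GD ex d yd n" and m="MM ex d yd n"]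
  unfolding BT_def by auto

end


context Alg begin

lemma step:
  assumes Xn: "X ex d yd n \<in> BB" and xh: "xh \<in> BB" "xh \<in> effdom R" "F xh = y"
    and yd: "norm (yd - y) \<le> d"
    and inv: "MM ex d yd n \<bullet> (X ex d yd n - xh) \<le> GAM ex d yd n"
  shows "MM ex d yd (Suc n) \<bullet> (X ex d yd (Suc n) - xh) \<le> GAM ex d yd (Suc n)"
    and "breg (XI ex d yd (Suc n)) xh (X ex d yd (Suc n)) \<le> breg (XI ex d yd n) xh (X ex d yd n)
          - AL ex d yd n * ((1 - \<eta> - \<mu>0 / (4 * \<sigma>)) * (norm (RS ex d yd n))\<^sup>2 - (1 + \<eta>) * d * norm (RS ex d yd n))"
proof -
  define \<alpha> where "\<alpha> = AL ex d yd n"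
  define g where "g = GD ex d yd n"
  define m where "m = MM ex d yd n"
  define b where "b = BT ex d yd n"
  define r where "r = norm (RS ex d yd n)"
  define x where "x = X ex d yd n"
  define x' where "x' = X ex d yd (Suc n)"
  define \<gamma> where "\<gamma> = GAM ex d yd n"
  define m' where "m' = MM ex d yd (Suc n)"
  have m': "m' = - \<alpha> *\<^sub>R g + b *\<^sub>R m" unfolding m'_def M_Suc \<alpha>_def g_def b_def m_def ..
  have a0: "0 \<le> \<alpha>" unfolding \<alpha>_def using AL_nonneg .
  have b0: "0 \<le> b" unfolding b_def using BT_props(1) .
  have key: "(x - xh) \<bullet> g \<ge> (1 - \<eta>) * r\<^sup>2 - (1 + \<eta>) * d * r"
    unfolding x_def g_def r_def GD_def RS_def using T3[OF Xn xh(1) xh(3) yd] .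
  have p1: "m' \<bullet> (x - xh) \<le> - \<alpha> * ((1 - \<eta>) * r\<^sup>2 - (1 + \<eta>) * d * r) + b * \<gamma>"
  proof -
    have "m' \<bullet> (x - xh) = - \<alpha> * ((x - xh) \<bullet> g) + b * (m \<bullet> (x - xh))"
      unfolding m' by (simp add: inner_add_left inner_diff_left inner_diff_right inner_commute algebra_simps)
    moreover have "- \<alpha> * ((x - xh) \<bullet> g) \<le> - \<alpha> * ((1 - \<eta>) * r\<^sup>2 - (1 + \<eta>) * d * r)"
      using mult_left_mono[OF key a0] by simp
    moreover have "b * (m \<bullet> (x - xh)) \<le> b * \<gamma>"
      using mult_left_mono[OF inv b0] unfolding m_def x_def \<gamma>_def by simp
    ultimately show ?thesis by linarith
  qed
  have GS: "GAM ex d yd (Suc n) = m' \<bullet> (x' - x) - (1 - \<eta>) * \<alpha> * r\<^sup>2 + (1 + \<eta>) * \<alpha> * d * r + b * \<gamma>"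
    unfolding IT_Suc(3) M_Suc'[symmetric] m'_def x'_def x_def \<alpha>_def r_def b_def \<gamma>_def ..
  show "MM ex d yd (Suc n) \<bullet> (X ex d yd (Suc n) - xh) \<le> GAM ex d yd (Suc n)"
  proof -
    have "m' \<bullet> (x' - xh) = m' \<bullet> (x' - x) + m' \<bullet> (x - xh)" by (simp add: inner_diff_right)
    then show ?thesis using p1 GS unfolding m'_def[symmetric] x'_def[symmetric]
      by (simp add: algebra_simps)
  qed
  have bs: "breg (XI ex d yd (Suc n)) xh x' - breg (XI ex d yd n) xh x \<le> (norm m')\<^sup>2 / (4 * \<sigma>) + m' \<bullet> (x - xh)"
    using breg_step[OF xh(2), of "XI ex d yd (Suc n)" "XI ex d yd n"]
    unfolding x'_def x_def X_def M_Suc'[symmetric] m'_def[symmetric] .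
  have h1: "(norm m')\<^sup>2 = \<alpha>\<^sup>2 * (norm g)\<^sup>2 - 2 * \<alpha> * b * (g \<bullet> m) + b\<^sup>2 * (norm m)\<^sup>2"
    unfolding m' power2_norm_eq_inner
    by (simp add: inner_add_left inner_add_right inner_commute algebra_simps power2_eq_square)
  have h2: "b\<^sup>2 * (norm m)\<^sup>2 - 2 * \<alpha> * b * (g \<bullet> m) + 4 * \<sigma> * b * \<gamma> \<le> 0"
  proof (cases "b > 0")
    case False then have "b = 0" using b0 by simp
    then show ?thesis by simp
  next
    case True
    have bm: "b * (norm m)\<^sup>2 \<le> \<alpha> * (g \<bullet> m) - 2 * \<sigma> * \<gamma>"
      using BT_props(3)[of ex d yd n] True unfolding b_def m_def \<alpha>_def g_def \<gamma>_def by auto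
    have "b * (b * (norm m)\<^sup>2) \<le> b * (\<alpha> * (g \<bullet> m) - 2 * \<sigma> * \<gamma>)" using mult_left_mono[OF bm b0] .
    moreover have "b * (b * (norm m)\<^sup>2) \<ge> 0" using b0 by simp
    ultimately have "b * (b * (norm m)\<^sup>2) - 2 * (b * (\<alpha> * (g \<bullet> m) - 2 * \<sigma> * \<gamma>)) \<le> 0" by linarith
    then show ?thesis by (simp add: algebra_simps power2_eq_square)
  qed
  have h3: "\<alpha>\<^sup>2 * (norm g)\<^sup>2 \<le> \<alpha> * \<mu>0 * r\<^sup>2"
  proof -
    have "\<alpha> * (norm g)\<^sup>2 \<le> \<mu>0 * r\<^sup>2" using AL_props(3)[OF Xn] unfolding \<alpha>_def g_def r_def .
    from mult_left_mono[OF this a0] show ?thesis by (simp add: power2_eq_square algebra_simps)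
  qed
  have "(norm m')\<^sup>2 \<le> \<alpha> * \<mu>0 * r\<^sup>2 - 4 * \<sigma> * (b * \<gamma>)" using h1 h2 h3 by (simp add: algebra_simps)
  then have "(norm m')\<^sup>2 / (4 * \<sigma>) \<le> (\<alpha> * \<mu>0 * r\<^sup>2 - 4 * \<sigma> * (b * \<gamma>)) / (4 * \<sigma>)"
    using sigma_pos by (simp add: divide_right_mono)
  also have "\<dots> = \<alpha> * (\<mu>0 / (4 * \<sigma>)) * r\<^sup>2 - b * \<gamma>" using sigma_pos by (simp add: field_simps)
  finally have h4: "(norm m')\<^sup>2 / (4 * \<sigma>) \<le> \<alpha> * (\<mu>0 / (4 * \<sigma>)) * r\<^sup>2 - b * \<gamma>" .
  have "breg (XI ex d yd (Suc n)) xh x' \<le> breg (XI ex d yd n) xh x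
     + (\<alpha> * (\<mu>0 / (4 * \<sigma>)) * r\<^sup>2 - \<alpha> * ((1 - \<eta>) * r\<^sup>2 - (1 + \<eta>) * d * r))"
    using bs h4 p1 by linarith
  also have "\<alpha> * (\<mu>0 / (4 * \<sigma>)) * r\<^sup>2 - \<alpha> * ((1 - \<eta>) * r\<^sup>2 - (1 + \<eta>) * d * r)
      = - \<alpha> * ((1 - \<eta> - \<mu>0 / (4 * \<sigma>)) * r\<^sup>2 - (1 + \<eta>) * d * r)" by (simp add: algebra_simps)
  finally show "breg (XI ex d yd (Suc n)) xh (X ex d yd (Suc n)) \<le> breg (XI ex d yd n) xh (X ex d yd n)
          - AL ex d yd n * ((1 - \<eta> - \<mu>0 / (4 * \<sigma>)) * (norm (RS ex d yd n))\<^sup>2 - (1 + \<eta>) * d * norm (RS ex d yd n))"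
    unfolding x'_def x_def \<alpha>_def r_def by simp
qed

definition "good ex d yd n \<longleftrightarrow> (\<forall>k<n. d * norm (RS ex d yd k) \<le> (norm (RS ex d yd k))\<^sup>2 / \<tau>)"

lemma coef_bound:
  assumes "d * r \<le> r\<^sup>2 / \<tau>" "r \<ge> 0"
  shows "(1 - \<eta> - \<mu>0 / (4 * \<sigma>)) * r\<^sup>2 - (1 + \<eta>) * d * r \<ge> c0 * r\<^sup>2"
proof -
  have "(1 + \<eta>) * (d * r) \<le> (1 + \<eta>) * (r\<^sup>2 / \<tau>)" using mult_left_mono[OF assms(1)] eta by simp
  then show ?thesis unfolding c0_def by (simp add: algebra_simps)
qed

lemma main_ind:
  assumes yd: "norm (yd - y) \<le> d" and gd: "good ex d yd n"
  shows "(\<forall>k\<le>n. norm (X ex d yd k - xb) \<le> \<rho>)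
    \<and> breg (XI ex d yd n) xb (X ex d yd n) + c0 * (\<Sum>k<n. AL ex d yd k * (norm (RS ex d yd k))\<^sup>2) \<le> breg \<xi>0 xb x0
    \<and> MM ex d yd n \<bullet> (X ex d yd n - xb) \<le> GAM ex d yd n"
  using gd
proof (induction n)
  case 0
  then show ?case using xb_near by (simp add: X_0 IT_0 M_0 norm_minus_commute)
next
  case (Suc n)
  have gn: "good ex d yd n" using Suc.prems unfolding good_def by simp
  note IH = Suc.IH[OF gn]
  have Xn: "X ex d yd n \<in> BB" using IH near_xb_in_BB by blast
  have st1: "MM ex d yd (Suc n) \<bullet> (X ex d yd (Suc n) - xb) \<le> GAM ex d yd (Suc n)"
    using step(1)[OF Xn xb_BB xb_dom xb_sol yd] IH by blast
  have st2: "breg (XI ex d yd (Suc n)) xb (X ex d yd (Suc n)) \<le> breg (XI ex d yd n) xb (X ex d yd n)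
          - AL ex d yd n * ((1 - \<eta> - \<mu>0 / (4 * \<sigma>)) * (norm (RS ex d yd n))\<^sup>2 - (1 + \<eta>) * d * norm (RS ex d yd n))"
    using step(2)[OF Xn xb_BB xb_dom xb_sol yd] IH by blast
  have cb: "(1 - \<eta> - \<mu>0 / (4 * \<sigma>)) * (norm (RS ex d yd n))\<^sup>2 - (1 + \<eta>) * d * norm (RS ex d yd n) \<ge> c0 * (norm (RS ex d yd n))\<^sup>2"
    using coef_bound Suc.prems unfolding good_def by simp
  have "AL ex d yd n * (c0 * (norm (RS ex d yd n))\<^sup>2) \<le> AL ex d yd n * ((1 - \<eta> - \<mu>0 / (4 * \<sigma>)) * (norm (RS ex d yd n))\<^sup>2 - (1 + \<eta>) * d * norm (RS ex d yd n))"
    using mult_left_mono[OF cb AL_nonneg] .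
  then have B: "breg (XI ex d yd (Suc n)) xb (X ex d yd (Suc n)) + c0 * (\<Sum>k<Suc n. AL ex d yd k * (norm (RS ex d yd k))\<^sup>2) \<le> breg \<xi>0 xb x0"
    using st2 IH by (simp add: algebra_simps)
  have sum0: "0 \<le> c0 * (\<Sum>k<Suc n. AL ex d yd k * (norm (RS ex d yd k))\<^sup>2)"
    using c0_pos AL_nonneg by (intro mult_nonneg_nonneg sum_nonneg) auto
  have "\<sigma> * (norm (xb - X ex d yd (Suc n)))\<^sup>2 \<le> breg (XI ex d yd (Suc n)) xb (X ex d yd (Suc n))"
    using breg_lower[OF XI_subdiff xb_dom] .
  then have "\<sigma> * (norm (xb - X ex d yd (Suc n)))\<^sup>2 \<le> \<sigma> * \<rho>\<^sup>2" using B sum0 xb_breg by linarith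
  then have "(norm (X ex d yd (Suc n) - xb))\<^sup>2 \<le> \<rho>\<^sup>2" using sigma_pos by (simp add: norm_minus_commute)
  then have "norm (X ex d yd (Suc n) - xb) \<le> \<rho>" using rho_pos by (simp add: power2_le_iff_abs_le)
  then have "\<forall>k\<le>Suc n. norm (X ex d yd k - xb) \<le> \<rho>" using IH le_Suc_eq by auto
  then show ?case using B st1 by blast
qed

lemma X_BB:
  assumes yd: "norm (yd - y) \<le> d" and gd: "good ex d yd n" and k: "k \<le> n"
  shows "X ex d yd k \<in> BB"
  using main_ind[OF yd gd] k near_xb_in_BB by blast

lemma mono_general:
  assumes yd: "norm (yd - y) \<le> d" and gd: "good ex d yd n"
    and xh: "xh \<in> BB" "xh \<in> effdom R" "F xh = y"
  shows "MM ex d yd n \<bullet> (X ex d yd n - xh) \<le> GAM ex d yd n"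
    and "\<And>k. k < n \<Longrightarrow> breg (XI ex d yd (Suc k)) xh (X ex d yd (Suc k)) \<le> breg (XI ex d yd k) xh (X ex d yd k)
          - c0 * (AL ex d yd k * (norm (RS ex d yd k))\<^sup>2)"
proof -
  have inv: "MM ex d yd k \<bullet> (X ex d yd k - xh) \<le> GAM ex d yd k" if "k \<le> n" for k
    using that
  proof (induction k)
    case 0 then show ?case by (simp add: M_0 IT_0)
  next
    case (Suc k)
    then show ?case using step(1)[OF X_BB[OF yd gd] xh yd] by simp
  qed
  then show "MM ex d yd n \<bullet> (X ex d yd n - xh) \<le> GAM ex d yd n" by simp
  fix k assume k: "k < n"
  have st2: "breg (XI ex d yd (Suc k)) xh (X ex d yd (Suc k)) \<le> breg (XI ex d yd k) xh (X ex d yd k)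
          - AL ex d yd k * ((1 - \<eta> - \<mu>0 / (4 * \<sigma>)) * (norm (RS ex d yd k))\<^sup>2 - (1 + \<eta>) * d * norm (RS ex d yd k))"
    using step(2)[OF X_BB[OF yd gd] xh yd inv] k by simp
  have cb: "(1 - \<eta> - \<mu>0 / (4 * \<sigma>)) * (norm (RS ex d yd k))\<^sup>2 - (1 + \<eta>) * d * norm (RS ex d yd k) \<ge> c0 * (norm (RS ex d yd k))\<^sup>2"
    using coef_bound gd k unfolding good_def by simp
  have "AL ex d yd k * (c0 * (norm (RS ex d yd k))\<^sup>2) \<le> AL ex d yd k * ((1 - \<eta> - \<mu>0 / (4 * \<sigma>)) * (norm (RS ex d yd k))\<^sup>2 - (1 + \<eta>) * d * norm (RS ex d yd k))"
    using mult_left_mono[OF cb AL_nonneg] .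
  then show "breg (XI ex d yd (Suc k)) xh (X ex d yd (Suc k)) \<le> breg (XI ex d yd k) xh (X ex d yd k)
          - c0 * (AL ex d yd k * (norm (RS ex d yd k))\<^sup>2)" using st2 by (simp add: algebra_simps)
qed

end


lemma geom_tendsto:
  fixes e t :: "nat \<Rightarrow> real"
  assumes e0: "\<And>n. 0 \<le> e n" and rec: "\<And>n. e (Suc n) \<le> q * e n + t n"
    and t: "t \<longlonglongrightarrow> 0" and q: "0 \<le> q" "q < 1"
  shows "e \<longlonglongrightarrow> 0"
proof (rule LIMSEQ_I)
  fix \<epsilon> :: real assume \<epsilon>: "\<epsilon> > 0"
  have "\<epsilon> * (1 - q) / 2 > 0" using \<epsilon> q by simp
  then obtain N where N: "\<And>n. n \<ge> N \<Longrightarrow> \<bar>t n\<bar> < \<epsilon> * (1 - q) / 2"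
    using LIMSEQ_D[OF t] by fastforce
  have bnd: "e (N + j) \<le> q ^ j * e N + \<epsilon> / 2" for j
  proof (induction j)
    case 0 then show ?case using \<epsilon> by simp
  next
    case (Suc j)
    have "e (N + Suc j) \<le> q * e (N + j) + t (N + j)" using rec[of "N + j"] by simp
    also have "\<dots> \<le> q * (q ^ j * e N + \<epsilon> / 2) + \<epsilon> * (1 - q) / 2"
      using mult_left_mono[OF Suc.IH q(1)] N[of "N + j"] by (smt (verit) le_add1)
    also have "\<dots> = q ^ Suc j * e N + \<epsilon> / 2" by (simp add: field_simps)
    finally show ?case .
  qed
  have "(\<lambda>j. q ^ j * e N) \<longlonglongrightarrow> 0 * e N"
    using tendsto_mult[OF LIMSEQ_power_zero[of q] tendsto_const[of "e N"]] q by simp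
  then obtain J where J: "\<And>j. j \<ge> J \<Longrightarrow> \<bar>q ^ j * e N\<bar> < \<epsilon> / 2"
    using LIMSEQ_D[of "\<lambda>j. q ^ j * e N" 0 "\<epsilon> / 2"] \<epsilon> by fastforce
  show "\<exists>no. \<forall>n\<ge>no. norm (e n - 0) < \<epsilon>"
  proof (intro exI allI impI)
    fix n assume n: "n \<ge> N + J"
    define j where "j = n - N"
    have j: "n = N + j" "j \<ge> J" using n unfolding j_def by auto
    have "e n \<le> q ^ j * e N + \<epsilon> / 2" using bnd j by simp
    then show "norm (e n - 0) < \<epsilon>" using J[OF j(2)] e0[of n] by simp
  qed
qed

context Alg begin

abbreviation "xE \<equiv> X True 0 y"
abbreviation "xiE \<equiv> XI True 0 y"
abbreviation "rE \<equiv> RS True 0 y"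
abbreviation "gE \<equiv> GD True 0 y"
abbreviation "aE \<equiv> AL True 0 y"
abbreviation "mE \<equiv> MM True 0 y"
abbreviation "bE \<equiv> BT True 0 y"
definition "fE k = aE k * (norm (rE k))\<^sup>2"
definition "DeltaE n = breg (xiE n) xb (xE n)"

lemma good_exact: "good True 0 y n" unfolding good_def using tau by simp

lemma yy: "norm (y - y) \<le> (0::real)" by simp

lemma xE_near: "norm (xE n - xb) \<le> \<rho>" using main_ind[OF yy good_exact] by blast

lemma xE_BB: "xE n \<in> BB" using near_xb_in_BB xE_near by blast

lemma rE_def': "rE n = F (xE n) - y" unfolding RS_def ..

lemma fE_nonneg: "0 \<le> fE k" unfolding fE_def using AL_nonneg by simp

lemma DeltaE_nonneg: "0 \<le> DeltaE n"
  unfolding DeltaE_def using breg_lower[OF XI_subdiff xb_dom, of True 0 y n] sigma_pos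
  by (smt (verit) mult_nonneg_nonneg zero_le_power2)

lemma DeltaE_sum: "DeltaE n + c0 * (\<Sum>k<n. fE k) \<le> breg \<xi>0 xb x0"
  using main_ind[OF yy good_exact] unfolding DeltaE_def fE_def by blast

lemma DeltaE_dec: "DeltaE (Suc n) \<le> DeltaE n"
proof -
  have "DeltaE (Suc n) \<le> DeltaE n - c0 * fE n"
    using mono_general(2)[OF yy good_exact[of "Suc n"] xb_BB xb_dom xb_sol, of n]
    unfolding DeltaE_def fE_def by simp
  then show ?thesis using c0_pos fE_nonneg[of n] by (smt (verit) mult_nonneg_nonneg)
qed

lemma fE_summable: "summable fE"
proof (rule summableI_nonneg_bounded)
  show "0 \<le> fE n" for n by (rule fE_nonneg)
  show "sum fE {..<n} \<le> breg \<xi>0 xb x0 / c0" for n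
    using DeltaE_sum[of n] DeltaE_nonneg[of n] c0_pos by (simp add: field_simps)
qed

lemma rE_tendsto: "(\<lambda>n. norm (rE n)) \<longlonglongrightarrow> 0"
proof -
  have le: "norm ((norm (rE n))\<^sup>2) \<le> fE n / Amin" for n
  proof (cases "rE n = 0")
    case True then show ?thesis using fE_nonneg Amin_pos by simp
  next
    case False
    have "Amin \<le> aE n" using AL_props(4)[OF xE_BB False] .
    then have "Amin * (norm (rE n))\<^sup>2 \<le> fE n" unfolding fE_def by (simp add: mult_right_mono)
    then show ?thesis using Amin_pos by (simp add: field_simps)
  qed
  have "summable (\<lambda>n. fE n / Amin)" using summable_divide[OF fE_summable] .
  then have "summable (\<lambda>n. (norm (rE n))\<^sup>2)"
    by (rule summable_comparison_test[rotated]) (use le in auto)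
  then have "(\<lambda>n. (norm (rE n))\<^sup>2) \<longlonglongrightarrow> 0" by (rule summable_LIMSEQ_zero)
  then have "(\<lambda>n. sqrt ((norm (rE n))\<^sup>2)) \<longlonglongrightarrow> sqrt 0" by (rule tendsto_real_sqrt)
  then show ?thesis by simp
qed

lemma mE_tendsto: "(\<lambda>n. norm (mE n)) \<longlonglongrightarrow> 0"
proof (rule geom_tendsto[where q=\<beta> and t="\<lambda>n. Amax * Lc * norm (rE n)"])
  show "0 \<le> norm (mE n)" for n by simp
  show "0 \<le> \<beta>" "\<beta> < 1" using beta by auto
  show "(\<lambda>n. Amax * Lc * norm (rE n)) \<longlonglongrightarrow> 0"
    using tendsto_mult[OF tendsto_const rE_tendsto, of "Amax * Lc"] by simp
  show "norm (mE (Suc n)) \<le> \<beta> * norm (mE n) + Amax * Lc * norm (rE n)" for n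
  proof -
    have "norm (mE (Suc n)) \<le> norm (aE n *\<^sub>R gE n) + norm (bE n *\<^sub>R mE n)"
      unfolding M_Suc scaleR_minus_left using norm_triangle_ineq[of "- (aE n *\<^sub>R gE n)" "bE n *\<^sub>R mE n"]
      by simp
    also have "norm (aE n *\<^sub>R gE n) = aE n * norm (gE n)" using AL_nonneg by simp
    also have "norm (bE n *\<^sub>R mE n) = bE n * norm (mE n)" using BT_props(1) by simp
    also have "aE n * norm (gE n) \<le> Amax * (Lc * norm (rE n))"
    proof -
      have A0: "0 \<le> Amax" using AL_nonneg AL_le order_trans by blast
      have "aE n * norm (gE n) \<le> Amax * norm (gE n)" using mult_right_mono[OF AL_le] by simp
      also have "\<dots> \<le> Amax * (Lc * norm (rE n))" using mult_left_mono[OF G_bound[OF xE_BB] A0] .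
      finally show ?thesis .
    qed
    also have "bE n * norm (mE n) \<le> \<beta> * norm (mE n)"
      using mult_right_mono[OF BT_props(2)] by simp
    finally show ?thesis by (simp add: algebra_simps)
  qed
qed

end


context Alg begin

lemma BB_dist: "u \<in> BB \<Longrightarrow> w \<in> BB \<Longrightarrow> norm (u - w) \<le> 4 * \<rho>"
proof -
  assume u: "u \<in> BB" and w: "w \<in> BB"
  have "norm (u - w) \<le> norm (u - x0) + norm (x0 - w)" using norm_triangle_ineq[of "u - x0" "x0 - w"] by simp
  also have "\<dots> \<le> 2 * \<rho> + 2 * \<rho>" using u w unfolding mem_cball dist_norm
    by (intro add_mono) (auto simp: norm_minus_commute)
  finally show ?thesis by simp
qed

lemma K_A:
  assumes k: "norm (rE l) \<le> norm (rE k)" and xh: "xh \<in> BB" "F xh = y"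
  shows "aE k * \<bar>gE k \<bullet> (xE l - xh)\<bar> \<le> 3 * (1 + \<eta>) * fE k"
proof -
  define v where "v = xE l - xh"
  have "\<bar>gE k \<bullet> v\<bar> = \<bar>L (xE k) v \<bullet> rE k\<bar>"
    unfolding GD_def by (simp add: adjoint_prop[symmetric] inner_commute)
  also have "\<dots> \<le> norm (L (xE k) v) * norm (rE k)" by (rule Cauchy_Schwarz_ineq2)
  also have "norm (L (xE k) v) \<le> 3 * (1 + \<eta>) * norm (rE k)"
  proof -
    have "L (xE k) v = L (xE k) (xE l - xE k) + L (xE k) (xE k - xh)"
      unfolding v_def by (simp add: blinfun.diff_right)
    then have a1: "norm (L (xE k) v) \<le> norm (L (xE k) (xE l - xE k)) + norm (L (xE k) (xE k - xh))"
      by (simp add: norm_triangle_ineq)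
    have a2: "norm (L (xE k) (xE l - xE k)) \<le> (1 + \<eta>) * norm (rE l - rE k)"
      using T1[OF xE_BB xE_BB, of k l] unfolding RS_def by simp
    have a3: "norm (L (xE k) (xE k - xh)) \<le> (1 + \<eta>) * norm (rE k)"
    proof -
      have "L (xE k) (xE k - xh) = - L (xE k) (xh - xE k)" by (simp add: blinfun.diff_right)
      then have "norm (L (xE k) (xE k - xh)) = norm (L (xE k) (xh - xE k))" by simp
      also have "\<dots> \<le> (1 + \<eta>) * norm (F xh - F (xE k))" using T1[OF xh(1) xE_BB] .
      finally show ?thesis unfolding RS_def xh(2) by (simp add: norm_minus_commute)
    qed
    have a4: "norm (rE l - rE k) \<le> 2 * norm (rE k)" using norm_triangle_ineq4[of "rE l" "rE k"] k by simp
    have a5: "(1 + \<eta>) * norm (rE l - rE k) \<le> (1 + \<eta>) * (2 * norm (rE k))"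
      using mult_left_mono[OF a4] eta by simp
    have "norm (L (xE k) v) \<le> (1 + \<eta>) * (2 * norm (rE k)) + (1 + \<eta>) * norm (rE k)"
      using a1 a2 a3 a5 by linarith
    also have "\<dots> = 3 * (1 + \<eta>) * norm (rE k)" by (simp add: algebra_simps)
    finally show ?thesis .
  qed
  finally have "\<bar>gE k \<bullet> v\<bar> \<le> 3 * (1 + \<eta>) * norm (rE k) * norm (rE k)"
    by (simp add: mult_right_mono)
  then have "aE k * \<bar>gE k \<bullet> v\<bar> \<le> aE k * (3 * (1 + \<eta>) * norm (rE k) * norm (rE k))"
    by (rule mult_left_mono[OF _ AL_nonneg])
  then show ?thesis unfolding fE_def v_def by (simp add: power2_eq_square algebra_simps)
qed

lemma K_M:
  "\<bar>mE (Suc k) \<bullet> v\<bar> \<le> aE k * \<bar>gE k \<bullet> v\<bar> + \<beta> * \<bar>mE k \<bullet> v\<bar>"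
proof -
  have e: "mE (Suc k) \<bullet> v = bE k * (mE k \<bullet> v) - aE k * (gE k \<bullet> v)"
    unfolding M_Suc by (simp add: inner_add_left inner_diff_left)
  have "\<bar>bE k * (mE k \<bullet> v) - aE k * (gE k \<bullet> v)\<bar> \<le> \<bar>bE k * (mE k \<bullet> v)\<bar> + \<bar>aE k * (gE k \<bullet> v)\<bar>"
    by (rule abs_triangle_ineq4)
  also have "\<bar>bE k * (mE k \<bullet> v)\<bar> = bE k * \<bar>mE k \<bullet> v\<bar>" using BT_props(1) by (simp add: abs_mult)
  also have "\<bar>aE k * (gE k \<bullet> v)\<bar> = aE k * \<bar>gE k \<bullet> v\<bar>" using AL_nonneg by (simp add: abs_mult)
  also have "bE k * \<bar>mE k \<bullet> v\<bar> \<le> \<beta> * \<bar>mE k \<bullet> v\<bar>" using BT_props(2) by (simp add: mult_right_mono)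
  finally show ?thesis unfolding e by simp
qed

lemma K_tele: "n \<le> a \<Longrightarrow> xiE a - xiE n = (\<Sum>k = n..<a. mE (Suc k))"
  using sum_Suc_diff'[of n a xiE] by (simp add: M_Suc')

lemma K_rec:
  fixes A Mk :: "nat \<Rightarrow> real"
  assumes rec: "\<And>k. Mk (Suc k) \<le> A k + \<beta> * Mk k" and M0: "\<And>k. 0 \<le> Mk k"
  shows "(1 - \<beta>) * (\<Sum>k = n..<n + j. Mk (Suc k)) + \<beta> * Mk (n + j) \<le> (\<Sum>k = n..<n + j. A k) + \<beta> * Mk n"
proof (induction j)
  case 0 then show ?case by simp
next
  case (Suc j)
  have "(1 - \<beta>) * (\<Sum>k = n..<n + Suc j. Mk (Suc k)) + \<beta> * Mk (n + Suc j)
      = (1 - \<beta>) * (\<Sum>k = n..<n + j. Mk (Suc k)) + Mk (Suc (n + j))"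
    by (simp add: algebra_simps)
  also have "\<dots> \<le> (1 - \<beta>) * (\<Sum>k = n..<n + j. Mk (Suc k)) + A (n + j) + \<beta> * Mk (n + j)"
    using rec[of "n + j"] by simp
  also have "\<dots> \<le> (\<Sum>k = n..<n + j. A k) + \<beta> * Mk n + A (n + j)" using Suc.IH by simp
  finally show ?case by simp
qed

lemma K:
  assumes na: "n \<le> a" and rec: "\<And>k. n \<le> k \<Longrightarrow> k < a \<Longrightarrow> norm (rE l) \<le> norm (rE k)"
    and xh: "xh \<in> BB" "F xh = y"
  shows "\<bar>(xiE a - xiE n) \<bullet> (xE l - xh)\<bar> \<le> (3 * (1 + \<eta>) * (\<Sum>k = n..<a. fE k) + 4 * \<rho> * norm (mE n)) / (1 - \<beta>)"
proof -
  define v where "v = xE l - xh"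
  define A where "A k = aE k * \<bar>gE k \<bullet> v\<bar>" for k
  define Mk where "Mk k = \<bar>mE k \<bullet> v\<bar>" for k
  obtain j where j: "a = n + j" using na le_Suc_ex by blast
  have r: "(1 - \<beta>) * (\<Sum>k = n..<a. Mk (Suc k)) + \<beta> * Mk a \<le> (\<Sum>k = n..<a. A k) + \<beta> * Mk n"
    using K_rec[of Mk A n j] K_M unfolding A_def Mk_def j by auto
  have s1: "\<bar>(xiE a - xiE n) \<bullet> v\<bar> \<le> (\<Sum>k = n..<a. Mk (Suc k))"
    unfolding K_tele[OF na] Mk_def inner_sum_left by (rule sum_abs)
  have s2: "(\<Sum>k = n..<a. A k) \<le> 3 * (1 + \<eta>) * (\<Sum>k = n..<a. fE k)"
    unfolding sum_distrib_left A_def v_def using K_A[OF _ xh] rec by (intro sum_mono) auto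
  have vb: "norm v \<le> 4 * \<rho>" unfolding v_def using BB_dist[OF xE_BB xh(1)] .
  have s3: "\<beta> * Mk n \<le> 4 * \<rho> * norm (mE n)"
  proof -
    have "Mk n \<le> norm (mE n) * norm v" unfolding Mk_def by (rule Cauchy_Schwarz_ineq2)
    also have "\<dots> \<le> norm (mE n) * (4 * \<rho>)" using vb by (simp add: mult_left_mono)
    finally have "Mk n \<le> 4 * \<rho> * norm (mE n)" by (simp add: algebra_simps)
    moreover have "\<beta> * Mk n \<le> Mk n" using beta mult_left_le_one_le[of "Mk n" \<beta>] unfolding Mk_def by simp
    ultimately show ?thesis by linarith
  qed
  have "\<beta> * Mk a \<ge> 0" using beta unfolding Mk_def by simp
  then have "(1 - \<beta>) * (\<Sum>k = n..<a. Mk (Suc k)) \<le> 3 * (1 + \<eta>) * (\<Sum>k = n..<a. fE k) + 4 * \<rho> * norm (mE n)"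
    using r s2 s3 by linarith
  then have "(\<Sum>k = n..<a. Mk (Suc k)) \<le> (3 * (1 + \<eta>) * (\<Sum>k = n..<a. fE k) + 4 * \<rho> * norm (mE n)) / (1 - \<beta>)"
    using beta by (simp add: field_simps)
  then show ?thesis using s1 unfolding v_def by linarith
qed

end


context Alg begin

definition "Etail n = (3 * (1 + \<eta>) * (suminf fE - sum fE {..<n}) + 4 * \<rho> * norm (mE n)) / (1 - \<beta>)"

lemma sum_seg_le: "n \<le> a \<Longrightarrow> (\<Sum>k = n..<a. fE k) \<le> suminf fE - sum fE {..<n}"
proof -
  assume na: "n \<le> a"
  have "sum fE {..<a} = sum fE {..<n} + (\<Sum>k = n..<a. fE k)"
    using sum.atLeastLessThan_concat[of 0 n a fE] na by (simp add: lessThan_atLeast0)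
  moreover have "sum fE {..<a} \<le> suminf fE"
    using sum_le_suminf[OF fE_summable, of "{..<a}"] fE_nonneg by auto
  ultimately show ?thesis by linarith
qed

lemma tail_nonneg: "0 \<le> suminf fE - sum fE {..<n}"
  using sum_seg_le[of n n] by simp

lemma Etail_nonneg: "0 \<le> Etail n"
  unfolding Etail_def using beta eta tail_nonneg rho_pos by (intro divide_nonneg_nonneg add_nonneg_nonneg) auto

lemma Etail_tendsto: "Etail \<longlonglongrightarrow> 0"
proof -
  have t: "(\<lambda>n. suminf fE - sum fE {..<n}) \<longlonglongrightarrow> 0"
    using tendsto_diff[OF tendsto_const summable_LIMSEQ[OF fE_summable], of "suminf fE"] by simp
  have "(\<lambda>n. (3 * (1 + \<eta>) * (suminf fE - sum fE {..<n}) + 4 * \<rho> * norm (mE n)) / (1 - \<beta>))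
      \<longlonglongrightarrow> (3 * (1 + \<eta>) * 0 + 4 * \<rho> * 0) / (1 - \<beta>)"
    by (intro tendsto_intros t mE_tendsto) (use beta in auto)
  then show ?thesis unfolding Etail_def by simp
qed

lemma K':
  assumes na: "n \<le> a" and rec: "\<And>k. n \<le> k \<Longrightarrow> k < a \<Longrightarrow> norm (rE l) \<le> norm (rE k)"
    and xh: "xh \<in> BB" "F xh = y"
  shows "\<bar>(xiE a - xiE n) \<bullet> (xE l - xh)\<bar> \<le> Etail n"
proof -
  have "3 * (1 + \<eta>) * (\<Sum>k = n..<a. fE k) \<le> 3 * (1 + \<eta>) * (suminf fE - sum fE {..<n})"
    using sum_seg_le[OF na] eta by (intro mult_left_mono) auto
  then have "(3 * (1 + \<eta>) * (\<Sum>k = n..<a. fE k) + 4 * \<rho> * norm (mE n)) / (1 - \<beta>) \<le> Etail n"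
    unfolding Etail_def using beta by (intro divide_right_mono) auto
  then show ?thesis using K[OF na rec xh] by linarith
qed

lemma breg_identity:
  "breg (xiE a) (xE b) (xE a) = DeltaE a - DeltaE b + (xiE b - xiE a) \<bullet> (xE b - xb)"
  unfolding breg_def DeltaE_def by (simp add: inner_diff_left inner_diff_right algebra_simps)

lemma DeltaE_antimono: assumes "l \<le> m" shows "DeltaE m \<le> DeltaE l"
  using assms
proof (induction m rule: dec_induct)
  case base then show ?case by simp
next
  case (step k) then show ?case using DeltaE_dec[of k] by linarith
qed

lemma DeltaE_conv: obtains L0 where "DeltaE \<longlonglongrightarrow> L0" "\<And>i. L0 \<le> DeltaE i"
proof -
  have "antimono_on UNIV DeltaE" using DeltaE_antimono by (auto simp: monotone_on_def)
  moreover have "\<forall>i. 0 \<le> DeltaE i" using DeltaE_nonneg by blast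
  ultimately show ?thesis using decseq_convergent[of DeltaE 0] that by blast
qed

lemma argmin_ex:
  assumes "n \<le> m"
  shows "\<exists>l. n \<le> l \<and> l \<le> m \<and> (\<forall>k. n \<le> k \<longrightarrow> k \<le> m \<longrightarrow> norm (rE l) \<le> norm (rE k))"
proof -
  have "finite {n..m}" "{n..m} \<noteq> {}" using assms by auto
  from ex_is_arg_min_if_finite[OF this, of "\<lambda>k. norm (rE k)"] obtain l where
    "is_arg_min (\<lambda>k. norm (rE k)) (\<lambda>k. k \<in> {n..m}) l" by blast
  then show ?thesis unfolding is_arg_min_def by (auto simp: not_less)
qed

lemma x_dist_sq: "\<sigma> * (norm (xE l - xE n))\<^sup>2 \<le> breg (xiE n) (xE l) (xE n)"
  using breg_lower[OF XI_subdiff X_dom] by simp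

lemma pair_bound:
  assumes L0: "\<And>i. L0 \<le> DeltaE i" and nm: "n \<le> m"
  shows "\<exists>l. \<sigma> * (norm (xE l - xE n))\<^sup>2 \<le> DeltaE n - L0 + 2 * Etail n
           \<and> \<sigma> * (norm (xE l - xE m))\<^sup>2 \<le> DeltaE n - L0 + 2 * Etail n"
proof -
  obtain l where l: "n \<le> l" "l \<le> m" "\<And>k. n \<le> k \<Longrightarrow> k \<le> m \<Longrightarrow> norm (rE l) \<le> norm (rE k)"
    using argmin_ex[OF nm] by blast
  have k1: "\<bar>(xiE l - xiE n) \<bullet> (xE l - xb)\<bar> \<le> Etail n"
    using K'[OF l(1) _ xb_BB xb_sol, of l] l by auto
  have k2: "\<bar>(xiE m - xiE n) \<bullet> (xE l - xb)\<bar> \<le> Etail n"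
    using K'[OF nm _ xb_BB xb_sol, of l] l by auto
  have e0: "0 \<le> Etail n" by (rule Etail_nonneg)
  have b1: "\<sigma> * (norm (xE l - xE n))\<^sup>2 \<le> DeltaE n - DeltaE l + (xiE l - xiE n) \<bullet> (xE l - xb)"
    using x_dist_sq[of l n] breg_identity[of n l] by simp
  have b2: "\<sigma> * (norm (xE l - xE m))\<^sup>2 \<le> DeltaE m - DeltaE l + (xiE l - xiE m) \<bullet> (xE l - xb)"
    using x_dist_sq[of l m] breg_identity[of m l] by simp
  have sp: "(xiE l - xiE m) \<bullet> (xE l - xb) = (xiE l - xiE n) \<bullet> (xE l - xb) - (xiE m - xiE n) \<bullet> (xE l - xb)"
    by (simp add: inner_diff_left)
  have "DeltaE m \<le> DeltaE l" using DeltaE_antimono[OF l(2)] .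
  moreover have "DeltaE n - DeltaE l \<le> DeltaE n - L0" using L0[of l] by simp
  moreover have "0 \<le> DeltaE n - L0" using L0[of n] by simp
  ultimately show ?thesis using b1 b2 sp k1 k2 e0 by (intro exI[of _ l]) (auto simp: abs_le_iff)
qed

lemma xE_cauchy: "Cauchy xE"
proof -
  obtain L0 where L0: "DeltaE \<longlonglongrightarrow> L0" "\<And>i. L0 \<le> DeltaE i" using DeltaE_conv by blast
  define D where "D n = DeltaE n - L0 + 2 * Etail n" for n
  have Dt: "D \<longlonglongrightarrow> 0"
  proof -
    have "D \<longlonglongrightarrow> L0 - L0 + 2 * 0" unfolding D_def by (intro tendsto_intros L0(1) Etail_tendsto)
    then show ?thesis by simp
  qed
  show ?thesis
  proof (rule metric_CauchyI)
    fix e :: real assume e: "e > 0"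
    have "\<sigma> * (e / 2)\<^sup>2 > 0" using e sigma_pos by simp
    then obtain N where N: "\<And>n. n \<ge> N \<Longrightarrow> \<bar>D n\<bar> < \<sigma> * (e / 2)\<^sup>2"
      using LIMSEQ_D[OF Dt] by fastforce
    have half: "norm (xE a - xE b) < e / 2" if "\<sigma> * (norm (xE a - xE b))\<^sup>2 \<le> D n" "n \<ge> N" for a b n
    proof -
      have "\<sigma> * (norm (xE a - xE b))\<^sup>2 < \<sigma> * (e / 2)\<^sup>2" using that N[of n] by auto
      then have "(norm (xE a - xE b))\<^sup>2 < (e / 2)\<^sup>2" using sigma_pos by simp
      then show ?thesis by (rule power_less_imp_less_base) (use e in auto)
    qed
    have main: "dist (xE n) (xE m) < e" if nN: "n \<ge> N" and nm: "n \<le> m" for n m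
    proof -
      obtain l where l: "\<sigma> * (norm (xE l - xE n))\<^sup>2 \<le> D n" "\<sigma> * (norm (xE l - xE m))\<^sup>2 \<le> D n"
        using pair_bound[OF L0(2) nm] unfolding D_def by blast
      have "norm (xE l - xE n) < e / 2" "norm (xE l - xE m) < e / 2" using half l nN by auto
      then have "norm (xE n - xE m) < e"
        using norm_triangle_ineq[of "xE n - xE l" "xE l - xE m"] by (simp add: norm_minus_commute)
      then show ?thesis by (simp add: dist_norm)
    qed
    show "\<exists>M. \<forall>n\<ge>M. \<forall>m\<ge>M. dist (xE n) (xE m) < e"
    proof (intro exI allI impI)
      fix n m assume "n \<ge> N" "m \<ge> N"
      then show "dist (xE n) (xE m) < e"
        using main[of n m] main[of m n] by (cases "n \<le> m") (auto simp: dist_commute)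
    qed
  qed
qed

end


context Alg begin

definition "xsE = lim xE"

lemma xE_tendsto: "xE \<longlonglongrightarrow> xsE"
  unfolding xsE_def using xE_cauchy Cauchy_convergent_iff convergent_LIMSEQ_iff by blast

lemma xsE_near: "norm (xsE - xb) \<le> \<rho>"
proof -
  have "xsE \<in> cball xb \<rho>"
    using Lim_in_closed_set[OF closed_cball _ _ xE_tendsto] xE_near
    by (auto simp: dist_norm norm_minus_commute)
  then show ?thesis by (simp add: dist_norm norm_minus_commute)
qed

lemma xsE_BB: "xsE \<in> BB" using near_xb_in_BB xsE_near by blast

lemma xsE_sol: "F xsE = y"
proof -
  have a: "(\<lambda>n. F (xE n)) \<longlonglongrightarrow> F xsE"
    using continuous_on_tendsto_compose[OF F_cont xE_tendsto xsE_BB] xE_BB by auto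
  have "(\<lambda>n. rE n) \<longlonglongrightarrow> 0" using rE_tendsto tendsto_norm_zero_iff by blast
  then have "(\<lambda>n. rE n + y) \<longlonglongrightarrow> 0 + y" by (intro tendsto_intros)
  then have b: "(\<lambda>n. F (xE n)) \<longlonglongrightarrow> y" unfolding RS_def by simp
  show ?thesis using LIMSEQ_unique[OF a b] .
qed

lemma breg_self: "breg \<xi> z z = 0" unfolding breg_def by simp

lemma stationary:
  assumes rk: "rE k = 0" and j: "k \<le> j"
  shows "xE j = xE k"
proof -
  have sol: "F (xE k) = y" using rk unfolding RS_def by simp
  have dec: "breg (xiE (Suc i)) (xE k) (xE (Suc i)) \<le> breg (xiE i) (xE k) (xE i)" for i
  proof -
    have "breg (xiE (Suc i)) (xE k) (xE (Suc i)) \<le> breg (xiE i) (xE k) (xE i) - c0 * fE i"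
      using mono_general(2)[OF yy good_exact[of "Suc i"] xE_BB X_dom sol, of i] unfolding fE_def by simp
    then show ?thesis using c0_pos fE_nonneg[of i] by (smt (verit) mult_nonneg_nonneg)
  qed
  have "breg (xiE j) (xE k) (xE j) \<le> 0" using j
  proof (induction j rule: dec_induct)
    case base then show ?case by (simp add: breg_self)
  next
    case (step i) then show ?case using dec[of i] by linarith
  qed
  moreover have "\<sigma> * (norm (xE k - xE j))\<^sup>2 \<le> breg (xiE j) (xE k) (xE j)" by (rule x_dist_sq)
  ultimately have "\<sigma> * (norm (xE k - xE j))\<^sup>2 \<le> 0" by linarith
  then have "(norm (xE k - xE j))\<^sup>2 \<le> 0" using sigma_pos by (simp add: mult_le_0_iff)
  then show ?thesis by simp
qed

lemma caseA:
  assumes rk: "rE k = 0"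
  shows "xsE = xE k" "\<And>j. j \<ge> k \<Longrightarrow> breg (xiE j) xsE (xE j) = 0"
proof -
  have ev: "eventually (\<lambda>j. xE j = xE k) sequentially"
    unfolding eventually_sequentially using stationary[OF rk] by blast
  have "xE \<longlonglongrightarrow> xE k" using tendsto_eventually[OF ev] by simp
  then show xs: "xsE = xE k" using LIMSEQ_unique[OF xE_tendsto] by blast
  fix j assume jk: "j \<ge> k"
  have "xE j = xE k" using stationary[OF rk jk] .
  then show "breg (xiE j) xsE (xE j) = 0" using xs by (simp add: breg_self)
qed

lemma caseB:
  assumes nz: "\<And>k. rE k \<noteq> 0" and L0: "\<And>i. L0 \<le> DeltaE i"
  shows "xsE \<in> effdom R \<and> breg (xiE n) xsE (xE n) \<le> DeltaE n - L0 + Etail n"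
proof -
  define B where "B = DeltaE n - L0 + Etail n"
  define P where "P m l \<longleftrightarrow> n \<le> l \<and> l \<le> max n m \<and> (\<forall>k. n \<le> k \<longrightarrow> k \<le> max n m \<longrightarrow> norm (rE l) \<le> norm (rE k))" for m l
  define ls where "ls m = (SOME l. P m l)" for m
  have Pls: "P m (ls m)" for m
    unfolding ls_def P_def by (rule someI_ex) (use argmin_ex[of n "max n m"] in auto)
  have lim: "filterlim ls at_top sequentially"
    unfolding filterlim_at_top eventually_sequentially
  proof (intro allI)
    fix K :: nat
    define K' where "K' = max K n"
    define \<mu> where "\<mu> = Min ((\<lambda>k. norm (rE k)) ` {n..K'})"
    have fin: "finite ((\<lambda>k. norm (rE k)) ` {n..K'})" "(\<lambda>k. norm (rE k)) ` {n..K'} \<noteq> {}"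
      unfolding K'_def by auto
    have \<mu>pos: "\<mu> > 0"
    proof -
      have "\<mu> \<in> (\<lambda>k. norm (rE k)) ` {n..K'}" unfolding \<mu>_def using Min_in[OF fin] .
      then show ?thesis using nz by auto
    qed
    have \<mu>le: "\<mu> \<le> norm (rE k)" if "n \<le> k" "k \<le> K'" for k
      unfolding \<mu>_def using Min_le[OF fin(1)] that by auto
    obtain N where N: "\<And>m. m \<ge> N \<Longrightarrow> \<bar>norm (rE m)\<bar> < \<mu>"
      using LIMSEQ_D[OF rE_tendsto \<mu>pos] by fastforce
    show "\<exists>N. \<forall>m\<ge>N. K \<le> ls m"
    proof (intro exI allI impI)
      fix m assume m: "m \<ge> max N K'"
      have Pm: "P m (ls m)" by (rule Pls)
      then have "norm (rE (ls m)) \<le> norm (rE m)" using m unfolding P_def K'_def by auto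
      also have "\<dots> < \<mu>" using N[of m] m by auto
      finally have "norm (rE (ls m)) < \<mu>" .
      then have "\<not> (ls m \<le> K')" using \<mu>le[of "ls m"] Pm unfolding P_def by force
      then show "K \<le> ls m" unfolding K'_def by simp
    qed
  qed
  have xl: "(\<lambda>m. xE (ls m)) \<longlonglongrightarrow> xsE" using filterlim_compose[OF xE_tendsto lim] .
  have bnd: "Rr (xE (ls m)) \<le> Rr (xE n) + xiE n \<bullet> (xE (ls m) - xE n) + B" for m
  proof -
    have Pm: "P m (ls m)" by (rule Pls)
    then have kb: "\<bar>(xiE (ls m) - xiE n) \<bullet> (xE (ls m) - xb)\<bar> \<le> Etail n"
      unfolding P_def using K'[OF _ _ xb_BB xb_sol, of n "ls m" "ls m"] by auto
    have "breg (xiE n) (xE (ls m)) (xE n) = DeltaE n - DeltaE (ls m) + (xiE (ls m) - xiE n) \<bullet> (xE (ls m) - xb)"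
      by (rule breg_identity)
    also have "\<dots> \<le> B" unfolding B_def using kb L0[of "ls m"] by (simp add: abs_le_iff)
    finally show ?thesis unfolding breg_def by simp
  qed
  have eps: "xsE \<in> effdom R \<and> Rr xsE \<le> Rr (xE n) + xiE n \<bullet> (xsE - xE n) + B + e" if e: "e > 0" for e
  proof -
    have t: "(\<lambda>m. xiE n \<bullet> (xE (ls m) - xE n)) \<longlonglongrightarrow> xiE n \<bullet> (xsE - xE n)"
      by (intro tendsto_intros xl)
    have ev: "eventually (\<lambda>m. xiE n \<bullet> (xE (ls m) - xE n) < xiE n \<bullet> (xsE - xE n) + e) sequentially"
      using order_tendstoD(2)[OF t] e by simp
    have "eventually (\<lambda>m. xE (ls m) \<in> effdom R \<and> Rr (xE (ls m)) \<le> Rr (xE n) + xiE n \<bullet> (xsE - xE n) + B + e) sequentially"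
      using ev
    proof eventually_elim
      case (elim m) then show ?case using bnd[of m] X_dom by auto
    qed
    from lsc_limit[OF xl this] show ?thesis .
  qed
  have dom: "xsE \<in> effdom R" using eps[of 1] by simp
  have "Rr xsE \<le> Rr (xE n) + xiE n \<bullet> (xsE - xE n) + B"
  proof (rule field_le_epsilon)
    fix e :: real assume "e > 0" then show "Rr xsE \<le> Rr (xE n) + xiE n \<bullet> (xsE - xE n) + B + e"
      using eps by blast
  qed
  then show ?thesis using dom unfolding breg_def B_def by simp
qed

lemma exact_main:
  "xsE \<in> effdom R \<and> (\<lambda>n. breg (xiE n) xsE (xE n)) \<longlonglongrightarrow> 0"
proof (cases "\<exists>k. rE k = 0")
  case True
  then obtain k where rk: "rE k = 0" by blast
  have "xsE \<in> effdom R" using caseA(1)[OF rk] X_dom by simp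
  moreover have "(\<lambda>n. breg (xiE n) xsE (xE n)) \<longlonglongrightarrow> 0"
  proof -
    have "eventually (\<lambda>j. breg (xiE j) xsE (xE j) = 0) sequentially"
      unfolding eventually_sequentially using caseA(2)[OF rk] by blast
    then show ?thesis by (rule tendsto_eventually)
  qed
  ultimately show ?thesis by blast
next
  case False
  then have nz: "\<And>k. rE k \<noteq> 0" by blast
  obtain L0 where L0: "DeltaE \<longlonglongrightarrow> L0" "\<And>i. L0 \<le> DeltaE i" using DeltaE_conv by blast
  have cb: "xsE \<in> effdom R \<and> breg (xiE n) xsE (xE n) \<le> DeltaE n - L0 + Etail n" for n
    using caseB[OF nz L0(2)] .
  have dom: "xsE \<in> effdom R" using cb[of 0] by blast
  have lo: "0 \<le> breg (xiE n) xsE (xE n)" for n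
    using breg_lower[OF XI_subdiff dom, of True 0 y n] sigma_pos by (smt (verit) mult_nonneg_nonneg zero_le_power2)
  have up: "(\<lambda>n. DeltaE n - L0 + Etail n) \<longlonglongrightarrow> L0 - L0 + 0"
    by (intro tendsto_intros L0(1) Etail_tendsto)
  have "(\<lambda>n. breg (xiE n) xsE (xE n)) \<longlonglongrightarrow> 0"
    by (rule tendsto_sandwich[where f="\<lambda>_. 0" and h="\<lambda>n. DeltaE n - L0 + Etail n"])
      (use lo cb up in auto)
  then show ?thesis using dom by blast
qed

end


context Alg begin

lemma breg_X_nonneg: "z \<in> effdom R \<Longrightarrow> 0 \<le> breg (XI ex d yd n) z (X ex d yd n)"
  using breg_lower[OF XI_subdiff, of z ex d yd n] sigma_pos by (smt (verit) mult_nonneg_nonneg zero_le_power2)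

lemma good_before_stop:
  assumes d: "d \<ge> 0" and h: "\<And>k. k < n \<Longrightarrow> norm (RS False d yd k) > \<tau> * d"
  shows "good False d yd n"
  unfolding good_def
proof (intro allI impI)
  fix k assume k: "k < n"
  have r: "\<tau> * d < norm (RS False d yd k)" using h[OF k] .
  then have "\<tau> * d * norm (RS False d yd k) \<le> norm (RS False d yd k) * norm (RS False d yd k)"
    by (intro mult_right_mono) auto
  then have "\<tau> * (d * norm (RS False d yd k)) \<le> (norm (RS False d yd k))\<^sup>2"
    by (simp add: power2_eq_square algebra_simps)
  then show "d * norm (RS False d yd k) \<le> (norm (RS False d yd k))\<^sup>2 / \<tau>"
    using tau by (simp add: field_simps)
qed

lemma stop_exists:
  assumes d: "d > 0" and yd: "norm (yd - y) \<le> d"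
  shows "\<exists>n. norm (RS False d yd n) \<le> \<tau> * d"
proof (rule ccontr)
  assume "\<not> ?thesis"
  then have h: "\<And>n. norm (RS False d yd n) > \<tau> * d" by (simp add: not_le)
  define q where "q = c0 * (Amin * (\<tau> * d)\<^sup>2)"
  have q: "q > 0" unfolding q_def using c0_pos Amin_pos d tau by simp
  obtain n :: nat where n: "real n > breg \<xi>0 xb x0 / q" using reals_Archimedean2 by blast
  have gd: "good False d yd n" using good_before_stop[of d n yd] h d by simp
  have mi: "breg (XI False d yd n) xb (X False d yd n) + c0 * (\<Sum>k<n. AL False d yd k * (norm (RS False d yd k))\<^sup>2) \<le> breg \<xi>0 xb x0"
    using main_ind[OF yd gd] by blast
  have hterm: "Amin * (\<tau> * d)\<^sup>2 \<le> AL False d yd k * (norm (RS False d yd k))\<^sup>2" if k: "k < n" for k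
  proof -
    have XB: "X False d yd k \<in> BB" using X_BB[OF yd gd, of k] k by simp
    have rne: "RS False d yd k \<noteq> 0" using h[of k] d tau by (smt (verit) mult_pos_pos norm_zero)
    have a: "Amin \<le> AL False d yd k" using AL_props(4)[OF XB rne] .
    have "(\<tau> * d)\<^sup>2 \<le> (norm (RS False d yd k))\<^sup>2" using h[of k] d tau by (intro power_mono) auto
    then show ?thesis using a Amin_pos by (intro mult_mono) auto
  qed
  have "real n * (Amin * (\<tau> * d)\<^sup>2) \<le> (\<Sum>k<n. AL False d yd k * (norm (RS False d yd k))\<^sup>2)"
    using sum_mono[of "{..<n}" "\<lambda>_. Amin * (\<tau> * d)\<^sup>2", OF hterm] by simp
  then have "real n * q \<le> c0 * (\<Sum>k<n. AL False d yd k * (norm (RS False d yd k))\<^sup>2)"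
    unfolding q_def using c0_pos by (simp add: mult_left_mono algebra_simps)
  moreover have "0 \<le> breg (XI False d yd n) xb (X False d yd n)" using breg_X_nonneg[OF xb_dom] .
  ultimately have "real n * q \<le> breg \<xi>0 xb x0" using mi by linarith
  then have "real n \<le> breg \<xi>0 xb x0 / q" using q by (simp add: field_simps)
  then show False using n by simp
qed

definition "ndx d yd = (LEAST n. norm (RS False d yd n) \<le> \<tau> * d)"

lemma stop_index_eq:
  "stop_index R F L Lc \<eta> \<sigma> \<beta> \<mu>0 \<mu>1 adaptive \<xi>0 \<tau> d yd = ndx d yd"
  unfolding stop_index_def ndx_def iter_x_eq RS_def ..

lemma ndx_props:
  assumes d: "d > 0" and yd: "norm (yd - y) \<le> d"
  shows "norm (RS False d yd (ndx d yd)) \<le> \<tau> * d"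
    "\<And>k. k < ndx d yd \<Longrightarrow> norm (RS False d yd k) > \<tau> * d"
    "good False d yd (ndx d yd)"
proof -
  show "norm (RS False d yd (ndx d yd)) \<le> \<tau> * d"
    unfolding ndx_def using LeastI_ex[OF stop_exists[OF d yd]] .
  show lt: "norm (RS False d yd k) > \<tau> * d" if k: "k < ndx d yd" for k
  proof -
    have "\<not> (norm (RS False d yd k) \<le> \<tau> * d)" using k unfolding ndx_def by (rule not_less_Least)
    then show ?thesis by simp
  qed
  show "good False d yd (ndx d yd)" using good_before_stop[of d "ndx d yd" yd] lt d by simp
qed

lemma noisy_mono:
  assumes d: "d > 0" and yd: "norm (yd - y) \<le> d"
    and xh: "xh \<in> BB" "xh \<in> effdom R" "F xh = y" and kn: "N \<le> k" "k \<le> ndx d yd"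
  shows "breg (XI False d yd k) xh (X False d yd k) \<le> breg (XI False d yd N) xh (X False d yd N)"
  using kn
proof (induction k rule: dec_induct)
  case base then show ?case by simp
next
  case (step i)
  have "breg (XI False d yd (Suc i)) xh (X False d yd (Suc i)) \<le> breg (XI False d yd i) xh (X False d yd i)
          - c0 * (AL False d yd i * (norm (RS False d yd i))\<^sup>2)"
    using mono_general(2)[OF yd ndx_props(3)[OF d yd] xh] step by simp
  moreover have "0 \<le> c0 * (AL False d yd i * (norm (RS False d yd i))\<^sup>2)"
    using c0_pos AL_nonneg by simp
  ultimately show ?case using step by linarith
qed

lemma noisy_BB:
  assumes d: "d > 0" and yd: "norm (yd - y) \<le> d" and k: "k \<le> ndx d yd"
  shows "X False d yd k \<in> BB"
  using X_BB[OF yd ndx_props(3)[OF d yd] k] .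

lemma gE_zero_imp: "gE n = 0 \<Longrightarrow> rE n = 0"
proof -
  assume g: "gE n = 0"
  have "(xE n - xb) \<bullet> gE n \<ge> (1 - \<eta>) * (norm (rE n))\<^sup>2 - (1 + \<eta>) * 0 * norm (rE n)"
    unfolding GD_def RS_def using T3[OF xE_BB xb_BB xb_sol yy] .
  then have "(1 - \<eta>) * (norm (rE n))\<^sup>2 \<le> 0" using g by simp
  then have "(norm (rE n))\<^sup>2 \<le> 0" using eta by (simp add: mult_le_0_iff)
  then show "rE n = 0" by simp
qed

lemma gamE_zero: "mE n = 0 \<Longrightarrow> GAM True 0 y n = 0"
proof (cases n)
  case 0 then show ?thesis by (simp add: IT_0)
next
  case (Suc k)
  assume m0: "mE n = 0"
  have eq: "aE k *\<^sub>R gE k = bE k *\<^sub>R mE k" using m0 unfolding Suc M_Suc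
    by (simp add: algebra_simps)
  have rk: "rE k = 0"
  proof (rule ccontr)
    assume rne: "rE k \<noteq> 0"
    have apos: "aE k > 0" using AL_props(4)[OF xE_BB rne] Amin_pos by linarith
    have gne: "gE k \<noteq> 0" using gE_zero_imp rne by blast
    show False
    proof (cases "bE k > 0")
      case False
      then have "bE k = 0" using BT_props(1)[of True 0 y k] by simp
      then have "aE k *\<^sub>R gE k = 0" using eq by simp
      then show False using apos gne by simp
    next
      case True
      have bp: "mE k \<noteq> 0 \<and> bE k * (norm (mE k))\<^sup>2 \<le> aE k * (gE k \<bullet> mE k) - 2 * \<sigma> * GAM True 0 y k"
        using BT_props(3)[OF True] .
      have "aE k * (gE k \<bullet> mE k) = (aE k *\<^sub>R gE k) \<bullet> mE k" by simp
      also have "\<dots> = bE k * (norm (mE k))\<^sup>2" unfolding eq by (simp add: power2_norm_eq_inner)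
      finally have "2 * \<sigma> * GAM True 0 y k \<le> 0" using bp by linarith
      then have gam: "GAM True 0 y k \<le> 0" using sigma_pos by (simp add: mult_le_0_iff)
      have inv: "mE k \<bullet> (xE k - xb) \<le> GAM True 0 y k"
        using mono_general(1)[OF yy good_exact xb_BB xb_dom xb_sol] .
      have mk: "mE k = (aE k / bE k) *\<^sub>R gE k"
      proof -
        have "(aE k / bE k) *\<^sub>R gE k = (1 / bE k) *\<^sub>R (aE k *\<^sub>R gE k)" by simp
        also have "\<dots> = (1 / bE k) *\<^sub>R (bE k *\<^sub>R mE k)" using eq by simp
        also have "\<dots> = mE k" using True by simp
        finally show ?thesis by simp
      qed
      have key: "(xE k - xb) \<bullet> gE k \<ge> (1 - \<eta>) * (norm (rE k))\<^sup>2 - (1 + \<eta>) * 0 * norm (rE k)"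
        unfolding GD_def RS_def using T3[OF xE_BB xb_BB xb_sol yy] .
      have pos: "(1 - \<eta>) * (norm (rE k))\<^sup>2 > 0" using rne eta by simp
      have "(aE k / bE k) * ((xE k - xb) \<bullet> gE k) > 0"
        using apos True key pos by (intro mult_pos_pos) auto
      moreover have "mE k \<bullet> (xE k - xb) = (aE k / bE k) * ((xE k - xb) \<bullet> gE k)"
        unfolding mk by (simp add: inner_commute)
      ultimately show False using inv gam by linarith
    qed
  qed
  have gk: "gE k = 0" using G_bound[OF xE_BB, of k] rk by simp
  have bm: "bE k *\<^sub>R mE k = 0" using eq gk by simp
  have bg: "bE k * GAM True 0 y k = 0"
  proof (cases "mE k = 0")
    case True then show ?thesis using BT_props(4) by simp
  next
    case False then have "bE k = 0" using bm by simp
    then show ?thesis by simp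
  qed
  have "GAM True 0 y n = (xiE (Suc k) - xiE k) \<bullet> (xE (Suc k) - xE k) - (1 - \<eta>) * aE k * (norm (rE k))\<^sup>2
      + (1 + \<eta>) * aE k * 0 * norm (rE k) + bE k * GAM True 0 y k"
    unfolding Suc by (rule IT_Suc(3))
  also have "xiE (Suc k) - xiE k = 0" using m0 unfolding Suc M_Suc' .
  finally show ?thesis using rk bg by simp
qed

end


locale NS = Alg R \<sigma> x0 \<xi>0 F L \<rho> \<eta> Lc y xb \<beta> \<mu>0 \<mu>1 \<tau> adaptive
  for R :: "'a::{real_inner,complete_space} \<Rightarrow> ereal" and \<sigma> x0 \<xi>0
    and F :: "'a \<Rightarrow> 'b::{real_inner,complete_space}" and L \<rho> \<eta> Lc y xb \<beta> \<mu>0 \<mu>1 \<tau> adaptive +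
  fixes ds :: "nat \<Rightarrow> real" and yds :: "nat \<Rightarrow> 'b"
  assumes ds_pos: "\<And>l. ds l > 0" and ds_lim: "ds \<longlonglongrightarrow> 0" and yds_b: "\<And>l. norm (yds l - y) \<le> ds l"
begin

definition "nd l = ndx (ds l) (yds l)"
definition "FF n = inf sequentially (principal {l. n \<le> nd l})"

lemma FF_mono: "FF (Suc n) \<le> FF n"
  unfolding FF_def by (intro inf_mono order_refl) auto

lemma FF_le_seq: "FF n \<le> sequentially" unfolding FF_def by simp

lemma ev_FF: "eventually (\<lambda>l. n \<le> nd l) (FF n)"
  unfolding FF_def eventually_inf_principal by simp

lemma ds_FF: "(ds \<longlongrightarrow> 0) (FF n)" using tendsto_mono[OF FF_le_seq ds_lim] .

lemma yds_lim: "yds \<longlonglongrightarrow> y"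
proof -
  have "(\<lambda>l. yds l - y) \<longlonglongrightarrow> 0"
    by (rule Lim_null_comparison[OF _ ds_lim]) (use yds_b in \<open>auto intro: always_eventually\<close>)
  then show ?thesis by (simp add: LIM_zero_iff)
qed

lemma yds_FF: "(yds \<longlongrightarrow> y) (FF n)" using tendsto_mono[OF FF_le_seq yds_lim] .

lemma XBB_FF: "eventually (\<lambda>l. X False (ds l) (yds l) k \<in> BB) (FF n)" if "k \<le> n"
  using ev_FF[of n]
proof (rule eventually_mono)
  fix l assume "n \<le> nd l"
  then show "X False (ds l) (yds l) k \<in> BB" using noisy_BB[OF ds_pos yds_b] that unfolding nd_def by simp
qed

abbreviation "xiN n l \<equiv> XI False (ds l) (yds l) n"
abbreviation "xpN n l \<equiv> XP False (ds l) (yds l) n"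
abbreviation "gamN n l \<equiv> GAM False (ds l) (yds l) n"
abbreviation "xN n l \<equiv> X False (ds l) (yds l) n"
abbreviation "rN n l \<equiv> RS False (ds l) (yds l) n"
abbreviation "gN n l \<equiv> GD False (ds l) (yds l) n"
abbreviation "aN n l \<equiv> AL False (ds l) (yds l) n"
abbreviation "mN n l \<equiv> MM False (ds l) (yds l) n"
abbreviation "bN n l \<equiv> BT False (ds l) (yds l) n"
abbreviation "gamE \<equiv> GAM True 0 y"
abbreviation "xpE \<equiv> XP True 0 y"

lemma stab_step:
  assumes c1: "((\<lambda>l. xiN n l) \<longlongrightarrow> xiE n) \<Phi>" and c1p: "((\<lambda>l. xpN n l) \<longlongrightarrow> xpE n) \<Phi>"
    and c1g: "((\<lambda>l. gamN n l) \<longlongrightarrow> gamE n) \<Phi>"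
    and dsl: "(ds \<longlongrightarrow> 0) \<Phi>" and ydl: "(yds \<longlongrightarrow> y) \<Phi>"
    and evB: "eventually (\<lambda>l. xN n l \<in> BB) \<Phi>"
  shows "((\<lambda>l. xiN (Suc n) l) \<longlongrightarrow> xiE (Suc n)) \<Phi>" "((\<lambda>l. xpN (Suc n) l) \<longlongrightarrow> xpE (Suc n)) \<Phi>"
    "((\<lambda>l. gamN (Suc n) l) \<longlongrightarrow> gamE (Suc n)) \<Phi>"
proof -
  have c2: "((\<lambda>l. xN n l) \<longlongrightarrow> xE n) \<Phi>" unfolding X_def using gR_tendsto[OF c1] .
  have Fc: "((\<lambda>l. F (xN n l)) \<longlongrightarrow> F (xE n)) \<Phi>"
    using continuous_on_tendsto_compose[OF F_cont c2 xE_BB evB] .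
  have c3: "((\<lambda>l. rN n l) \<longlongrightarrow> rE n) \<Phi>" unfolding RS_def by (intro tendsto_diff Fc ydl)
  have c4: "((\<lambda>l. L (xN n l)) \<longlongrightarrow> L (xE n)) \<Phi>"
    using continuous_on_tendsto_compose[OF L_cont c2 xE_BB evB] .
  have c5: "((\<lambda>l. gN n l) \<longlongrightarrow> gE n) \<Phi>"
  proof -
    have d4: "((\<lambda>l. norm (L (xN n l) - L (xE n))) \<longlongrightarrow> 0) \<Phi>"
      using c4 by (simp add: tendsto_norm_zero_iff LIM_zero_iff)
    have d3: "((\<lambda>l. norm (rN n l - rE n)) \<longlongrightarrow> 0) \<Phi>"
      using c3 by (simp add: tendsto_norm_zero_iff LIM_zero_iff)
    have "((\<lambda>l. norm (L (xN n l) - L (xE n)) * norm (rN n l) + norm (L (xE n)) * norm (rN n l - rE n))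
        \<longlongrightarrow> 0 * norm (rE n) + norm (L (xE n)) * 0) \<Phi>"
      by (intro tendsto_intros d4 d3 c3)
    then have z: "((\<lambda>l. norm (L (xN n l) - L (xE n)) * norm (rN n l) + norm (L (xE n)) * norm (rN n l - rE n))
        \<longlongrightarrow> 0) \<Phi>" by simp
    have "((\<lambda>l. gN n l - gE n) \<longlongrightarrow> 0) \<Phi>"
      by (rule Lim_null_comparison[OF _ z]) (auto intro!: always_eventually simp: GD_def adjoint_diff_bound)
    then show ?thesis by (simp add: LIM_zero_iff)
  qed
  have c6: "((\<lambda>l. mN n l) \<longlongrightarrow> mE n) \<Phi>" unfolding MM_def by (intro tendsto_diff c1 c1p)
  have c7: "((\<lambda>l. aN n l *\<^sub>R gN n l) \<longlongrightarrow> aE n *\<^sub>R gE n) \<Phi> \<and> ((\<lambda>l. aN n l * norm (rN n l)) \<longlongrightarrow> aE n * norm (rE n)) \<Phi>"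
  proof (cases "\<not> adaptive \<or> rE n \<noteq> 0")
    case True
    have al: "((\<lambda>l. aN n l) \<longlongrightarrow> aE n) \<Phi>"
    proof (cases adaptive)
      case False
      then show ?thesis unfolding AL_def stepsize_def by simp
    next
      case ad: True
      with True have rne: "rE n \<noteq> 0" by simp
      have gne: "gE n \<noteq> 0" using gE_zero_imp rne by blast
      have ngp: "norm (gE n) > 0" using gne by simp
      have ev: "eventually (\<lambda>l. norm (gN n l) > 0) \<Phi>"
        using order_tendstoD(1)[OF tendsto_norm[OF c5] ngp] .
      have aEq: "aE n = min (\<mu>0 * (norm (rE n))\<^sup>2 / (norm (gE n))\<^sup>2) \<mu>1"
        unfolding AL_def stepsize_def using ad rne gne by simp
      have lim: "((\<lambda>l. min (\<mu>0 * (norm (rN n l))\<^sup>2 / (norm (gN n l))\<^sup>2) \<mu>1) \<longlongrightarrow> aE n) \<Phi>"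
        unfolding aEq using ngp by (intro tendsto_intros c3 c5) auto
      have "eventually (\<lambda>l. min (\<mu>0 * (norm (rN n l))\<^sup>2 / (norm (gN n l))\<^sup>2) \<mu>1 = aN n l) \<Phi>"
          using ev
      proof eventually_elim
        case (elim l)
        show ?case unfolding AL_def stepsize_def using ad elim by simp
      qed
      then show ?thesis by (rule Lim_transform_eventually[OF lim])
    qed
    show ?thesis by (intro conjI tendsto_intros al c5 c3)
  next
    case False
    then have ad: adaptive and r0: "rE n = 0" by auto
    have g0: "gE n = 0" using G_bound[OF xE_BB, of n] r0 by simp
    have a0: "aE n = 0" unfolding AL_def stepsize_def using ad r0 by simp
    have Am: "0 \<le> Amax" using AL_nonneg AL_le order_trans by blast
    have z1: "((\<lambda>l. Amax * norm (gN n l)) \<longlongrightarrow> 0) \<Phi>"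
      using tendsto_mult[OF tendsto_const tendsto_norm[OF c5], of Amax] g0 by simp
    have z2: "((\<lambda>l. Amax * norm (rN n l)) \<longlongrightarrow> 0) \<Phi>"
      using tendsto_mult[OF tendsto_const tendsto_norm[OF c3], of Amax] r0 by simp
    have "((\<lambda>l. aN n l *\<^sub>R gN n l) \<longlongrightarrow> 0) \<Phi>"
      by (rule Lim_null_comparison[OF _ z1])
        (auto intro!: always_eventually mult_right_mono AL_le simp: AL_nonneg)
    moreover have "((\<lambda>l. aN n l * norm (rN n l)) \<longlongrightarrow> 0) \<Phi>"
      by (rule Lim_null_comparison[OF _ z2])
        (auto intro!: always_eventually mult_right_mono AL_le simp: AL_nonneg abs_mult)
    ultimately show ?thesis using a0 g0 r0 by simp
  qed
  have c7a: "((\<lambda>l. aN n l *\<^sub>R gN n l) \<longlongrightarrow> aE n *\<^sub>R gE n) \<Phi>" using c7 by blast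
  have c7b: "((\<lambda>l. aN n l * norm (rN n l)) \<longlongrightarrow> aE n * norm (rE n)) \<Phi>" using c7 by blast
  have c8: "((\<lambda>l. bN n l *\<^sub>R mN n l) \<longlongrightarrow> bE n *\<^sub>R mE n) \<Phi> \<and> ((\<lambda>l. bN n l * gamN n l) \<longlongrightarrow> bE n * gamE n) \<Phi>"
  proof (cases "mE n = 0")
    case False
    have nmp: "norm (mE n) > 0" using False by simp
    have ev: "eventually (\<lambda>l. norm (mN n l) > 0) \<Phi>"
      using order_tendstoD(1)[OF tendsto_norm[OF c6] nmp] .
    have bEq: "bE n = min (max 0 (((aE n *\<^sub>R gE n) \<bullet> mE n - 2 * \<sigma> * gamE n) / (norm (mE n))\<^sup>2)) \<beta>"
      unfolding BT_def momentum_def using False by simp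
    have lim: "((\<lambda>l. min (max 0 (((aN n l *\<^sub>R gN n l) \<bullet> mN n l - 2 * \<sigma> * gamN n l) / (norm (mN n l))\<^sup>2)) \<beta>) \<longlongrightarrow> bE n) \<Phi>"
      unfolding bEq using nmp by (intro tendsto_intros c7a c6 c1g) auto
    have "eventually (\<lambda>l. min (max 0 (((aN n l *\<^sub>R gN n l) \<bullet> mN n l - 2 * \<sigma> * gamN n l) / (norm (mN n l))\<^sup>2)) \<beta> = bN n l) \<Phi>"
      using ev by eventually_elim (auto simp: BT_def momentum_def)
    then have bl: "((\<lambda>l. bN n l) \<longlongrightarrow> bE n) \<Phi>" by (rule Lim_transform_eventually[OF lim])
    show ?thesis by (intro conjI tendsto_intros bl c6 c1g)
  next
    case True
    have b0: "bE n = 0" using BT_props(4) True by simp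
    have g0: "gamE n = 0" using gamE_zero True by simp
    have z1: "((\<lambda>l. \<beta> * norm (mN n l)) \<longlongrightarrow> 0) \<Phi>"
      using tendsto_mult[OF tendsto_const tendsto_norm[OF c6], of \<beta>] True by simp
    have z2: "((\<lambda>l. \<beta> * norm (gamN n l)) \<longlongrightarrow> 0) \<Phi>"
      using tendsto_mult[OF tendsto_const tendsto_norm[OF c1g], of \<beta>] g0 by simp
    have "((\<lambda>l. bN n l *\<^sub>R mN n l) \<longlongrightarrow> 0) \<Phi>"
      by (rule Lim_null_comparison[OF _ z1])
        (auto intro!: always_eventually mult_right_mono simp: BT_props(1,2))
    moreover have "((\<lambda>l. bN n l * gamN n l) \<longlongrightarrow> 0) \<Phi>"
      by (rule Lim_null_comparison[OF _ z2])
        (auto intro!: always_eventually mult_right_mono simp: BT_props(1,2) abs_mult)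
    ultimately show ?thesis using b0 by simp
  qed
  have c8a: "((\<lambda>l. bN n l *\<^sub>R mN n l) \<longlongrightarrow> bE n *\<^sub>R mE n) \<Phi>" using c8 by blast
  have c8b: "((\<lambda>l. bN n l * gamN n l) \<longlongrightarrow> bE n * gamE n) \<Phi>" using c8 by blast
  show xi: "((\<lambda>l. xiN (Suc n) l) \<longlongrightarrow> xiE (Suc n)) \<Phi>"
    unfolding IT_Suc(2) by (intro tendsto_intros c1 c7a c8a)
  show "((\<lambda>l. xpN (Suc n) l) \<longlongrightarrow> xpE (Suc n)) \<Phi>" unfolding IT_Suc(1) by (rule c1)
  have x1: "((\<lambda>l. xN (Suc n) l) \<longlongrightarrow> xE (Suc n)) \<Phi>" unfolding X_def[of False] X_def[of True] using gR_tendsto[OF xi] .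
  have eqN: "gamN (Suc n) l = (xiN (Suc n) l - xiN n l) \<bullet> (xN (Suc n) l - xN n l)
      - (1 - \<eta>) * (aN n l * norm (rN n l)) * norm (rN n l) + (1 + \<eta>) * (aN n l * norm (rN n l)) * ds l
      + bN n l * gamN n l" for l
    unfolding IT_Suc(3) by (simp add: power2_eq_square algebra_simps)
  have eqE: "gamE (Suc n) = (xiE (Suc n) - xiE n) \<bullet> (xE (Suc n) - xE n)
      - (1 - \<eta>) * (aE n * norm (rE n)) * norm (rE n) + (1 + \<eta>) * (aE n * norm (rE n)) * 0
      + bE n * gamE n"
    unfolding IT_Suc(3) by (simp add: power2_eq_square algebra_simps)
  show "((\<lambda>l. gamN (Suc n) l) \<longlongrightarrow> gamE (Suc n)) \<Phi>"
    unfolding eqN eqE by (intro tendsto_intros xi c1 x1 c2 c7b c3 dsl c8b)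
qed

end


context NS begin

lemma stab: "((\<lambda>l. xiN n l) \<longlongrightarrow> xiE n) (FF n) \<and> ((\<lambda>l. xpN n l) \<longlongrightarrow> xpE n) (FF n) \<and> ((\<lambda>l. gamN n l) \<longlongrightarrow> gamE n) (FF n)"
proof (induction n)
  case 0 then show ?case by (simp add: IT_0)
next
  case (Suc n)
  have c1: "((\<lambda>l. xiN n l) \<longlongrightarrow> xiE n) (FF (Suc n))" using tendsto_mono[OF FF_mono] Suc by blast
  have c1p: "((\<lambda>l. xpN n l) \<longlongrightarrow> xpE n) (FF (Suc n))" using tendsto_mono[OF FF_mono] Suc by blast
  have c1g: "((\<lambda>l. gamN n l) \<longlongrightarrow> gamE n) (FF (Suc n))" using tendsto_mono[OF FF_mono] Suc by blast
  have evB: "eventually (\<lambda>l. xN n l \<in> BB) (FF (Suc n))" using XBB_FF[of n "Suc n"] by simp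
  show ?case using stab_step[OF c1 c1p c1g ds_FF yds_FF evB] by blast
qed

lemma breg_N_lim:
  assumes z: "z \<in> effdom R"
  shows "((\<lambda>l. breg (xiN n l) z (xN n l)) \<longlongrightarrow> breg (xiE n) z (xE n)) (FF n)"
  unfolding X_def using breg_tendsto[OF _ z] stab by blast

lemma rN_lim: "((\<lambda>l. rN n l) \<longlongrightarrow> rE n) (FF n)"
proof -
  have c1: "((\<lambda>l. xiN n l) \<longlongrightarrow> xiE n) (FF n)" using stab by blast
  have c2: "((\<lambda>l. xN n l) \<longlongrightarrow> xE n) (FF n)" unfolding X_def using gR_tendsto[OF c1] .
  have Fc: "((\<lambda>l. F (xN n l)) \<longlongrightarrow> F (xE n)) (FF n)"
    using continuous_on_tendsto_compose[OF F_cont c2 xE_BB XBB_FF[of n n]] by simp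
  show ?thesis unfolding RS_def by (intro tendsto_diff Fc yds_FF)
qed

lemma xsE_dom: "xsE \<in> effdom R" using exact_main by blast

lemma noisy_breg: "(\<lambda>l. breg (xiN (nd l) l) xsE (xN (nd l) l)) \<longlonglongrightarrow> 0"
proof (rule order_tendstoI)
  fix a :: real assume "a < 0"
  then show "eventually (\<lambda>l. a < breg (xiN (nd l) l) xsE (xN (nd l) l)) sequentially"
  proof (intro always_eventually allI)
    fix l
    have "0 \<le> breg (xiN (nd l) l) xsE (xN (nd l) l)" using breg_X_nonneg[OF xsE_dom] .
    then show "a < breg (xiN (nd l) l) xsE (xN (nd l) l)" using \<open>a < 0\<close> by linarith
  qed
next
  fix \<epsilon> :: real assume \<epsilon>: "0 < \<epsilon>"
  obtain N where N: "breg (xiE N) xsE (xE N) < \<epsilon>"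
  proof -
    have "eventually (\<lambda>n. breg (xiE n) xsE (xE n) < \<epsilon>) sequentially"
      using order_tendstoD(2)[OF conjunct2[OF exact_main] \<epsilon>] .
    then obtain N0 where "\<forall>n\<ge>N0. breg (xiE n) xsE (xE n) < \<epsilon>" unfolding eventually_sequentially by blast
    then show ?thesis using that by blast
  qed
  have evN: "eventually (\<lambda>l. breg (xiN N l) xsE (xN N l) < \<epsilon>) (FF N)"
    using order_tendstoD(2)[OF breg_N_lim[OF xsE_dom] N] .
  then have evN': "eventually (\<lambda>l. N \<le> nd l \<longrightarrow> breg (xiN N l) xsE (xN N l) < \<epsilon>) sequentially"
    unfolding FF_def eventually_inf_principal by simp
  have evn: "eventually (\<lambda>l. nd l = n \<longrightarrow> breg (xiN n l) xsE (xN n l) < \<epsilon>) sequentially" for n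
  proof (cases "rE n = 0")
    case True
    have xs: "xsE = xE n" using caseA(1)[OF True] .
    have "eventually (\<lambda>l. breg (xiN n l) xsE (xN n l) < \<epsilon>) (FF n)"
      using order_tendstoD(2)[OF breg_N_lim[OF xsE_dom, of n]] \<epsilon> xs by (simp add: breg_self)
    then have "eventually (\<lambda>l. n \<le> nd l \<longrightarrow> breg (xiN n l) xsE (xN n l) < \<epsilon>) sequentially"
      unfolding FF_def eventually_inf_principal by simp
    then show ?thesis by (rule eventually_mono) auto
  next
    case False
    have p: "norm (rE n) > 0" using False by simp
    have h2: "norm (rE n) / 2 < norm (rE n)" using p by simp
    have e1: "eventually (\<lambda>l. norm (rE n) / 2 < norm (rN n l)) (FF n)"
      using order_tendstoD(1)[OF tendsto_norm[OF rN_lim[of n]] h2] .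
    have "((\<lambda>l. \<tau> * ds l) \<longlongrightarrow> \<tau> * 0) (FF n)" by (intro tendsto_intros ds_FF)
    moreover have "\<tau> * 0 < norm (rE n) / 2" using p by simp
    ultimately have e2: "eventually (\<lambda>l. \<tau> * ds l < norm (rE n) / 2) (FF n)"
      by (rule order_tendstoD(2))
    have "eventually (\<lambda>l. \<tau> * ds l < norm (rN n l)) (FF n)"
      using e1 e2 by eventually_elim simp
    then have "eventually (\<lambda>l. n \<le> nd l \<longrightarrow> \<tau> * ds l < norm (rN n l)) sequentially"
      unfolding FF_def eventually_inf_principal by simp
    then show ?thesis
    proof (rule eventually_mono)
      fix l assume h: "n \<le> nd l \<longrightarrow> \<tau> * ds l < norm (rN n l)"
      show "nd l = n \<longrightarrow> breg (xiN n l) xsE (xN n l) < \<epsilon>"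
      proof
        assume e: "nd l = n"
        have "norm (rN (nd l) l) \<le> \<tau> * ds l" unfolding nd_def using ndx_props(1)[OF ds_pos yds_b] .
        then show "breg (xiN n l) xsE (xN n l) < \<epsilon>" using h e by simp
      qed
    qed
  qed
  have evall: "eventually (\<lambda>l. \<forall>n\<in>{..<N}. nd l = n \<longrightarrow> breg (xiN n l) xsE (xN n l) < \<epsilon>) sequentially"
    using evn by (intro eventually_ball_finite) auto
  show "eventually (\<lambda>l. breg (xiN (nd l) l) xsE (xN (nd l) l) < \<epsilon>) sequentially"
    using evN' evall
  proof eventually_elim
    case (elim l)
    show ?case
    proof (cases "N \<le> nd l")
      case True
      have "breg (xiN (nd l) l) xsE (xN (nd l) l) \<le> breg (xiN N l) xsE (xN N l)"
        using noisy_mono[OF ds_pos yds_b xsE_BB xsE_dom xsE_sol True] unfolding nd_def by simp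
      then show ?thesis using elim True by linarith
    next
      case False
      then show ?thesis using elim by auto
    qed
  qed
qed

lemma noisy_norm: "(\<lambda>l. norm (xN (nd l) l - xsE)) \<longlonglongrightarrow> 0"
proof -
  have le: "norm (norm (xN (nd l) l - xsE)) \<le> sqrt (breg (xiN (nd l) l) xsE (xN (nd l) l) / \<sigma>)" for l
  proof -
    have "\<sigma> * (norm (xsE - xN (nd l) l))\<^sup>2 \<le> breg (xiN (nd l) l) xsE (xN (nd l) l)"
      using breg_lower[OF XI_subdiff xsE_dom] .
    then have "(norm (xN (nd l) l - xsE))\<^sup>2 \<le> breg (xiN (nd l) l) xsE (xN (nd l) l) / \<sigma>"
      using sigma_pos by (simp add: field_simps norm_minus_commute)
    then show ?thesis by (simp add: real_le_rsqrt)
  qed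
  have "(\<lambda>l. sqrt (breg (xiN (nd l) l) xsE (xN (nd l) l) / \<sigma>)) \<longlonglongrightarrow> sqrt (0 / \<sigma>)"
    using sigma_pos by (intro tendsto_intros noisy_breg) auto
  then have "(\<lambda>l. sqrt (breg (xiN (nd l) l) xsE (xN (nd l) l) / \<sigma>)) \<longlonglongrightarrow> 0" by simp
  then show ?thesis by (rule Lim_null_comparison[rotated]) (use le in \<open>auto intro: always_eventually\<close>)
qed

end


context TS begin

definition "Cset = {x. x \<in> cball x0 \<rho> \<and> L xb (x - xb) = 0}"

lemma BB_sol_iff: "x \<in> BB \<Longrightarrow> (F x = y \<longleftrightarrow> L xb (x - xb) = 0)"
proof
  assume x: "x \<in> BB" and s: "F x = y"
  have "norm (L xb (x - xb)) \<le> (1 + \<eta>) * norm (F x - F xb)" using T1[OF x xb_BB] .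
  then show "L xb (x - xb) = 0" using s xb_sol by simp
next
  assume x: "x \<in> BB" and l: "L xb (x - xb) = 0"
  have "(1 - \<eta>) * norm (F x - F xb) \<le> norm (L xb (x - xb))" using T2[OF x xb_BB] .
  then have "(1 - \<eta>) * norm (F x - F xb) \<le> 0" using l by simp
  then have "norm (F x - F xb) \<le> 0" using eta by (simp add: mult_le_0_iff)
  then show "F x = y" using xb_sol by simp
qed

lemma cball_rho_BB: "x \<in> cball x0 \<rho> \<Longrightarrow> x \<in> BB"
  using rho_pos by (auto simp: mem_cball)

lemma Cset_closed: "closed Cset"
proof -
  have "continuous_on UNIV (\<lambda>x. L xb (x - xb))"
    by (intro continuous_intros)
  then have "closed {x. L xb (x - xb) = 0}"
    using closed_Collect_eq[of "\<lambda>x. L xb (x - xb)" "\<lambda>_. 0"] by auto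
  moreover have "Cset = cball x0 \<rho> \<inter> {x. L xb (x - xb) = 0}" unfolding Cset_def by auto
  ultimately show ?thesis by auto
qed

lemma Cset_convex: "convex Cset"
proof -
  have "convex {x. L xb (x - xb) = 0}"
  proof (rule convexI)
    fix a b :: 'a and u v :: real
    assume a: "a \<in> {x. L xb (x - xb) = 0}" and b: "b \<in> {x. L xb (x - xb) = 0}" and uv: "0 \<le> u" "0 \<le> v" "u + v = 1"
    have "u *\<^sub>R a + v *\<^sub>R b - xb = u *\<^sub>R (a - xb) + v *\<^sub>R (b - xb)" using uv(3)
      by (simp add: algebra_simps) (metis add.commute scaleR_add_left scaleR_one)
    then have "L xb (u *\<^sub>R a + v *\<^sub>R b - xb) = u *\<^sub>R L xb (a - xb) + v *\<^sub>R L xb (b - xb)"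
      by (simp add: blinfun.add_right blinfun.scaleR_right)
    then show "u *\<^sub>R a + v *\<^sub>R b \<in> {x. L xb (x - xb) = 0}" using a b by simp
  qed
  moreover have "Cset = cball x0 \<rho> \<inter> {x. L xb (x - xb) = 0}" unfolding Cset_def by auto
  ultimately show ?thesis by (simp add: convex_Int)
qed

lemma xb_Cset: "xb \<in> Cset"
  unfolding Cset_def using xb_near by (simp add: dist_norm norm_minus_commute)

lemma R_x0_fin: "R x0 = ereal (Rr x0)" using R_fin x0_dom by blast

lemma bregman0_dom: "x \<in> effdom R \<Longrightarrow> bregman R \<xi>0 x x0 = ereal (breg \<xi>0 x x0)"
  using bregman_real x0_dom by blast

lemma bregman0_nondom: "x \<notin> effdom R \<Longrightarrow> bregman R \<xi>0 x x0 = \<infinity>"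
  unfolding bregman_def using not_effdom R_x0_fin by simp

lemma breg_Phi: "breg \<xi>0 x x0 = Phi \<xi>0 x - Phi \<xi>0 x0"
  unfolding breg_def Phi_def by (simp add: inner_diff_right)

lemma xdag_unique:
  fixes domF :: "'a set"
  assumes ball_dom: "BB \<subseteq> domF"
  defines "P \<equiv> \<lambda>w. w \<in> domF \<and> F w = y \<and> (\<forall>z\<in>domF. F z = y \<longrightarrow> bregman R \<xi>0 w x0 \<le> bregman R \<xi>0 z x0)"
  shows "\<exists>xd. xd \<in> BB \<and> xd \<in> effdom R \<and> breg \<xi>0 xd x0 \<le> \<sigma> * \<rho>\<^sup>2 \<and> (\<forall>w. P w \<longleftrightarrow> w = xd)"
proof -
  obtain xd where xd: "xd \<in> Cset \<inter> effdom R" and xmin: "\<forall>z\<in>Cset \<inter> effdom R. Phi \<xi>0 xd \<le> Phi \<xi>0 z"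
    using min_exists[OF Cset_closed Cset_convex, of \<xi>0] xb_Cset xb_dom by blast
  have xdc: "xd \<in> cball x0 \<rho>" and xdl: "L xb (xd - xb) = 0" using xd unfolding Cset_def by auto
  have xdBB: "xd \<in> BB" using cball_rho_BB[OF xdc] .
  have xdsol: "F xd = y" using BB_sol_iff[OF xdBB] xdl by simp
  have xdD: "xd \<in> effdom R" using xd by simp
  have bxd: "breg \<xi>0 xd x0 \<le> breg \<xi>0 xb x0" using xmin xb_Cset xb_dom unfolding breg_Phi by auto
  have Cmin: "breg \<xi>0 xd x0 \<le> breg \<xi>0 z x0" if z: "z \<in> effdom R" "F z = y" for z
  proof (cases "norm (z - x0) \<le> \<rho>")
    case True
    then have zc: "z \<in> cball x0 \<rho>" by (simp add: dist_norm norm_minus_commute)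
    have "L xb (z - xb) = 0" using BB_sol_iff[OF cball_rho_BB[OF zc]] z(2) by simp
    then have "z \<in> Cset" unfolding Cset_def using zc by simp
    then show ?thesis using xmin z(1) unfolding breg_Phi by auto
  next
    case False
    then have "\<rho>\<^sup>2 < (norm (z - x0))\<^sup>2" using rho_pos by (simp add: power_strict_mono)
    then have "\<sigma> * \<rho>\<^sup>2 < \<sigma> * (norm (z - x0))\<^sup>2" using sigma_pos by simp
    also have "\<dots> \<le> breg \<xi>0 z x0" using breg_lower[OF xi0 z(1)] .
    finally show ?thesis using bxd xb_breg by linarith
  qed
  have Pxd: "P xd"
    unfolding P_def
  proof (intro conjI ballI impI)
    show "xd \<in> domF" using ball_dom xdBB by blast
    show "F xd = y" by (rule xdsol)
    fix z assume z: "z \<in> domF" "F z = y"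
    show "bregman R \<xi>0 xd x0 \<le> bregman R \<xi>0 z x0"
    proof (cases "z \<in> effdom R")
      case True then show ?thesis using Cmin[OF True z(2)] bregman0_dom[OF xdD] bregman0_dom[OF True] by simp
    next
      case False then show ?thesis using bregman0_nondom by simp
    qed
  qed
  have "P w \<longleftrightarrow> w = xd" for w
  proof
    assume Pw: "P w"
    have wdom: "w \<in> domF" and wsol: "F w = y" using Pw unfolding P_def by auto
    have le: "bregman R \<xi>0 w x0 \<le> bregman R \<xi>0 xd x0"
      using Pw ball_dom xdBB xdsol unfolding P_def by blast
    have wD: "w \<in> effdom R"
    proof (rule ccontr)
      assume "w \<notin> effdom R"
      then show False using le bregman0_nondom bregman0_dom[OF xdD] by simp
    qed
    have bw: "breg \<xi>0 w x0 \<le> breg \<xi>0 xd x0" using le bregman0_dom[OF xdD] bregman0_dom[OF wD] by simp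
    have "\<sigma> * (norm (w - x0))\<^sup>2 \<le> \<sigma> * \<rho>\<^sup>2"
      using breg_lower[OF xi0 wD] bw bxd xb_breg by linarith
    then have "(norm (w - x0))\<^sup>2 \<le> \<rho>\<^sup>2" using sigma_pos by simp
    then have "norm (w - x0) \<le> \<rho>" using rho_pos by (simp add: power2_le_iff_abs_le)
    then have wc: "w \<in> cball x0 \<rho>" by (simp add: dist_norm norm_minus_commute)
    have "L xb (w - xb) = 0" using BB_sol_iff[OF cball_rho_BB[OF wc]] wsol by simp
    then have wC: "w \<in> Cset" unfolding Cset_def using wc by simp
    have wmin: "\<forall>z\<in>Cset \<inter> effdom R. Phi \<xi>0 w \<le> Phi \<xi>0 z"
    proof
      fix z assume "z \<in> Cset \<inter> effdom R"
      then have "Phi \<xi>0 xd \<le> Phi \<xi>0 z" using xmin by blast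
      then show "Phi \<xi>0 w \<le> Phi \<xi>0 z" using bw unfolding breg_Phi by linarith
    qed
    show "w = xd" using min_unique[OF Cset_convex _ xd wmin xmin] wC wD by simp
  next
    assume "w = xd" then show "P w" using Pxd by simp
  qed
  then show ?thesis using xdBB xdD bxd xb_breg by (intro exI[of _ xd]) auto
qed

end

context Alg begin

lemma orth:
  assumes ker: "\<And>x. x \<in> BB \<Longrightarrow> L x' w = 0 \<Longrightarrow> L x w = 0" and w: "L x' w = 0"
  shows "(xiE n - \<xi>0) \<bullet> w = 0 \<and> mE n \<bullet> w = 0"
proof (induction n)
  case 0 then show ?case by (simp add: IT_0 M_0)
next
  case (Suc n)
  have g: "gE n \<bullet> w = 0"
  proof -
    have "gE n \<bullet> w = w \<bullet> gE n" by (simp add: inner_commute)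
    also have "\<dots> = L (xE n) w \<bullet> rE n" unfolding GD_def by (simp add: adjoint_prop[symmetric])
    also have "L (xE n) w = 0" using ker[OF xE_BB w] .
    finally show ?thesis by simp
  qed
  have m: "mE (Suc n) \<bullet> w = 0" unfolding M_Suc using g Suc by (simp add: inner_add_left inner_diff_left)
  have "xiE (Suc n) - \<xi>0 = (xiE n - \<xi>0) + mE (Suc n)" unfolding M_Suc' by simp
  then have "(xiE (Suc n) - \<xi>0) \<bullet> w = (xiE n - \<xi>0) \<bullet> w + mE (Suc n) \<bullet> w" by (simp only: inner_add_left)
  then have "(xiE (Suc n) - \<xi>0) \<bullet> w = 0" using m Suc by simp
  then show ?case using m by simp
qed

end


theorem mainTheorem9:
  fixes R :: "'a::{real_inner,complete_space} \<Rightarrow> ereal"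
    and F :: "'a \<Rightarrow> 'b::{real_inner,complete_space}"
    and domF :: "'a set"
    and L :: "'a \<Rightarrow> ('a \<Rightarrow>\<^sub>L 'b)"
    and \<sigma> \<rho> \<eta> Lc \<tau> \<beta> \<mu>0 \<mu>1 :: real
    and x0 \<xi>0 :: 'a and y :: 'b and adaptive :: bool
  assumes R_proper: "proper_fun R" and R_lsc: "lsc_fun R"
    and sigma_pos: "\<sigma> > 0" and R_sc: "strongly_convex R \<sigma>"
    and rho_pos: "\<rho> > 0" and xi0: "\<xi>0 \<in> subdiff R x0"
    and ball_dom: "cball x0 (2 * \<rho>) \<subseteq> domF"
    and sol: "\<exists>xb\<in>domF. F xb = y \<and> bregman R \<xi>0 xb x0 \<le> ereal (\<sigma> * \<rho>\<^sup>2)"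
    and weak_closed: "\<And>xs x v. (\<forall>n. xs n \<in> domF) \<Longrightarrow> weak_conv xs x \<Longrightarrow>
                        (\<lambda>n. F (xs n)) \<longlonglongrightarrow> v \<Longrightarrow> x \<in> domF \<and> F x = v"
    and L_cont: "continuous_on (cball x0 (2 * \<rho>)) L"
    and eta: "0 \<le> \<eta>" "\<eta> < 1"
    and tangential: "\<And>x xb. x \<in> cball x0 (2 * \<rho>) \<Longrightarrow> xb \<in> cball x0 (2 * \<rho>) \<Longrightarrow>
           norm (F x - F xb - L xb (x - xb)) \<le> \<eta> * norm (F x - F xb)"
    and Lc_pos: "Lc > 0" and L_bound: "\<And>x. x \<in> cball x0 (2 * \<rho>) \<Longrightarrow> norm (L x) \<le> Lc"
    and beta: "0 \<le> \<beta>" "\<beta> < 1"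
    and tau: "\<tau> > 1" and mu0: "\<mu>0 > 0" and mu1: "\<mu>1 > 0"
    and param: "1 - (1 + \<eta>) / \<tau> - \<eta> - \<mu>0 / (4 * \<sigma>) > 0"
  shows "\<exists>xs. xs \<in> domF \<and> F xs = y \<and> xs \<in> cball x0 (2 * \<rho>) \<and> xs \<in> effdom R
    \<and> (\<lambda>n. iter_x R F L Lc \<eta> \<sigma> \<beta> \<mu>0 \<mu>1 adaptive True \<xi>0 0 y n) \<longlonglongrightarrow> xs
    \<and> (\<forall>\<delta>s :: nat \<Rightarrow> real. \<forall>yds :: nat \<Rightarrow> 'b.
         (\<forall>l. \<delta>s l > 0) \<longrightarrow> \<delta>s \<longlonglongrightarrow> 0 \<longrightarrow> (\<forall>l. norm (yds l - y) \<le> \<delta>s l) \<longrightarrow>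
         (let nd = (\<lambda>l. stop_index R F L Lc \<eta> \<sigma> \<beta> \<mu>0 \<mu>1 adaptive \<xi>0 \<tau> (\<delta>s l) (yds l)) in
           (\<lambda>l. bregman R (iter_xi R F L Lc \<eta> \<sigma> \<beta> \<mu>0 \<mu>1 adaptive False \<xi>0 (\<delta>s l) (yds l) (nd l)) xs
                     (iter_x R F L Lc \<eta> \<sigma> \<beta> \<mu>0 \<mu>1 adaptive False \<xi>0 (\<delta>s l) (yds l) (nd l)))
             \<longlonglongrightarrow> 0
         \<and> (\<lambda>l. norm (iter_x R F L Lc \<eta> \<sigma> \<beta> \<mu>0 \<mu>1 adaptive False \<xi>0 (\<delta>s l) (yds l) (nd l) - xs))
             \<longlonglongrightarrow> 0))
    \<and> ((\<forall>x\<in>cball x0 (2 * \<rho>). {v. L (xdag R F domF y \<xi>0 x0) v = 0} \<subseteq> {v. L x v = 0})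
         \<longrightarrow> xs = xdag R F domF y \<xi>0 x0)"
proof -
  obtain xb where xb: "xb \<in> domF" "F xb = y" "bregman R \<xi>0 xb x0 \<le> ereal (\<sigma> * \<rho>\<^sup>2)"
    using sol by blast
  interpret RS: Rsetting R \<sigma> x0 \<xi>0
    using R_proper R_lsc sigma_pos R_sc xi0 by unfold_locales
  have x0d: "x0 \<in> effdom R" using RS.subdiff_iff xi0 by blast
  have xbd: "xb \<in> effdom R"
  proof (rule ccontr)
    assume "xb \<notin> effdom R"
    then have "bregman R \<xi>0 xb x0 = \<infinity>"
      unfolding bregman_def using RS.not_effdom RS.R_fin[OF x0d] by simp
    then show False using xb(3) by simp
  qed
  have xbb: "RS.breg \<xi>0 xb x0 \<le> \<sigma> * \<rho>\<^sup>2" using RS.bregman_real[OF xbd x0d] xb(3) by simp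
  interpret A: Alg R \<sigma> x0 \<xi>0 F L \<rho> \<eta> Lc y xb \<beta> \<mu>0 \<mu>1 \<tau> adaptive
    by unfold_locales (use rho_pos L_cont eta tangential Lc_pos L_bound xbd xb xbb beta tau mu0 mu1 param in auto)
  have BBdom: "cball x0 (2 * \<rho>) \<subseteq> domF" by (rule ball_dom)
  define xs where "xs = A.xsE"
  have xsBB: "xs \<in> cball x0 (2 * \<rho>)" unfolding xs_def using A.xsE_BB .
  have xssol: "F xs = y" unfolding xs_def using A.xsE_sol .
  have xsdom: "xs \<in> effdom R" unfolding xs_def using A.exact_main by blast
  have xsbreg: "(\<lambda>n. RS.breg (A.xiE n) xs (A.xE n)) \<longlonglongrightarrow> 0" unfolding xs_def using A.exact_main by blast
  have part1: "(\<lambda>n. iter_x R F L Lc \<eta> \<sigma> \<beta> \<mu>0 \<mu>1 adaptive True \<xi>0 0 y n) \<longlonglongrightarrow> xs"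
    unfolding A.iter_x_eq xs_def using A.xE_tendsto .
  have part2: "\<forall>\<delta>s :: nat \<Rightarrow> real. \<forall>yds :: nat \<Rightarrow> 'b.
         (\<forall>l. \<delta>s l > 0) \<longrightarrow> \<delta>s \<longlonglongrightarrow> 0 \<longrightarrow> (\<forall>l. norm (yds l - y) \<le> \<delta>s l) \<longrightarrow>
         (let nd = (\<lambda>l. stop_index R F L Lc \<eta> \<sigma> \<beta> \<mu>0 \<mu>1 adaptive \<xi>0 \<tau> (\<delta>s l) (yds l)) in
           (\<lambda>l. bregman R (iter_xi R F L Lc \<eta> \<sigma> \<beta> \<mu>0 \<mu>1 adaptive False \<xi>0 (\<delta>s l) (yds l) (nd l)) xs
                     (iter_x R F L Lc \<eta> \<sigma> \<beta> \<mu>0 \<mu>1 adaptive False \<xi>0 (\<delta>s l) (yds l) (nd l)))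
             \<longlonglongrightarrow> 0
         \<and> (\<lambda>l. norm (iter_x R F L Lc \<eta> \<sigma> \<beta> \<mu>0 \<mu>1 adaptive False \<xi>0 (\<delta>s l) (yds l) (nd l) - xs))
             \<longlonglongrightarrow> 0)"
  proof (intro allI impI)
    fix \<delta>s :: "nat \<Rightarrow> real" and yds :: "nat \<Rightarrow> 'b"
    assume h1: "\<forall>l. \<delta>s l > 0" and h2: "\<delta>s \<longlonglongrightarrow> 0" and h3: "\<forall>l. norm (yds l - y) \<le> \<delta>s l"
    interpret N: NS R \<sigma> x0 \<xi>0 F L \<rho> \<eta> Lc y xb \<beta> \<mu>0 \<mu>1 \<tau> adaptive \<delta>s yds
      by unfold_locales (use h1 h2 h3 in auto)
    have ndeq: "stop_index R F L Lc \<eta> \<sigma> \<beta> \<mu>0 \<mu>1 adaptive \<xi>0 \<tau> (\<delta>s l) (yds l) = N.nd l" for l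
      unfolding N.nd_def A.stop_index_eq ..
    have b: "bregman R (A.XI False (\<delta>s l) (yds l) (N.nd l)) xs (A.X False (\<delta>s l) (yds l) (N.nd l))
        = ereal (RS.breg (A.XI False (\<delta>s l) (yds l) (N.nd l)) xs (A.X False (\<delta>s l) (yds l) (N.nd l)))" for l
      using RS.bregman_real[OF xsdom A.X_dom] .
    have t1: "(\<lambda>l. ereal (RS.breg (A.XI False (\<delta>s l) (yds l) (N.nd l)) xs (A.X False (\<delta>s l) (yds l) (N.nd l)))) \<longlonglongrightarrow> ereal 0"
      using N.noisy_breg unfolding xs_def by (intro tendsto_ereal)
    show "let nd = (\<lambda>l. stop_index R F L Lc \<eta> \<sigma> \<beta> \<mu>0 \<mu>1 adaptive \<xi>0 \<tau> (\<delta>s l) (yds l)) in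
           (\<lambda>l. bregman R (iter_xi R F L Lc \<eta> \<sigma> \<beta> \<mu>0 \<mu>1 adaptive False \<xi>0 (\<delta>s l) (yds l) (nd l)) xs
                     (iter_x R F L Lc \<eta> \<sigma> \<beta> \<mu>0 \<mu>1 adaptive False \<xi>0 (\<delta>s l) (yds l) (nd l)))
             \<longlonglongrightarrow> 0
         \<and> (\<lambda>l. norm (iter_x R F L Lc \<eta> \<sigma> \<beta> \<mu>0 \<mu>1 adaptive False \<xi>0 (\<delta>s l) (yds l) (nd l) - xs))
             \<longlonglongrightarrow> 0"
      unfolding Let_def ndeq A.iter_x_eq A.iter_xi_eq b
      using t1 N.noisy_norm unfolding xs_def zero_ereal_def by simp
  qed
  have part3: "(\<forall>x\<in>cball x0 (2 * \<rho>). {v. L (xdag R F domF y \<xi>0 x0) v = 0} \<subseteq> {v. L x v = 0})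
         \<longrightarrow> xs = xdag R F domF y \<xi>0 x0"
  proof
    assume ker: "\<forall>x\<in>cball x0 (2 * \<rho>). {v. L (xdag R F domF y \<xi>0 x0) v = 0} \<subseteq> {v. L x v = 0}"
    define P where "P = (\<lambda>w. w \<in> domF \<and> F w = y \<and> (\<forall>z\<in>domF. F z = y \<longrightarrow> bregman R \<xi>0 w x0 \<le> bregman R \<xi>0 z x0))"
    obtain xd where xd: "xd \<in> cball x0 (2 * \<rho>)" "xd \<in> effdom R" "\<And>w. P w \<longleftrightarrow> w = xd"
      using A.xdag_unique[OF BBdom] unfolding P_def by blast
    have xdag: "xdag R F domF y \<xi>0 x0 = xd"
    proof -
      have "(THE x. P x) = xd" using xd(3) by (intro the1_equality) auto
      then show ?thesis unfolding xdag_def P_def .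
    qed
    have Pxd: "P xd" using xd(3) by simp
    have xdsol: "F xd = y" using Pxd unfolding P_def by simp
    have kerx: "\<And>x v. x \<in> cball x0 (2 * \<rho>) \<Longrightarrow> L xd v = 0 \<Longrightarrow> L x v = 0" using ker unfolding xdag by blast
    have w: "L xd (xs - xd) = 0"
    proof -
      have "norm (L xd (xs - xd)) \<le> (1 + \<eta>) * norm (F xs - F xd)" using A.T1[OF xsBB xd(1)] .
      then show ?thesis using xssol xdsol by simp
    qed
    have orth: "(A.xiE n - \<xi>0) \<bullet> (xs - xd) = 0" for n using A.orth[OF kerx w] by blast
    have id: "RS.breg (A.xiE n) xd (A.xE n) - RS.breg (A.xiE n) xs (A.xE n) = RS.breg \<xi>0 xd x0 - RS.breg \<xi>0 xs x0" for n
    proof -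
      have "(A.xiE n - \<xi>0) \<bullet> (xd - xs) = 0" using orth[of n] by (metis inner_minus_right minus_diff_eq neg_equal_0_iff_equal)
      then show ?thesis unfolding RS.breg_def by (simp add: inner_diff_left inner_diff_right algebra_simps)
    qed
    have "RS.breg \<xi>0 xs x0 - RS.breg \<xi>0 xd x0 \<le> 0"
    proof (rule LIMSEQ_le_const[OF xsbreg])
      show "\<exists>N. \<forall>n\<ge>N. RS.breg \<xi>0 xs x0 - RS.breg \<xi>0 xd x0 \<le> RS.breg (A.xiE n) xs (A.xE n)"
        using id A.breg_X_nonneg[OF xd(2)] by (intro exI[of _ 0] allI impI) (smt (verit))
    qed
    then have le: "RS.breg \<xi>0 xs x0 \<le> RS.breg \<xi>0 xd x0" by simp
    have "P xs"
      unfolding P_def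
    proof (intro conjI ballI impI)
      show "xs \<in> domF" using BBdom xsBB by blast
      show "F xs = y" by (rule xssol)
      fix z assume z: "z \<in> domF" "F z = y"
      have "bregman R \<xi>0 xd x0 \<le> bregman R \<xi>0 z x0" using Pxd z unfolding P_def by blast
      moreover have "bregman R \<xi>0 xs x0 \<le> bregman R \<xi>0 xd x0"
        using le RS.bregman_real[OF xsdom x0d] RS.bregman_real[OF xd(2) x0d] by simp
      ultimately show "bregman R \<xi>0 xs x0 \<le> bregman R \<xi>0 z x0" by (rule order_trans[rotated])
    qed
    then show "xs = xdag R F domF y \<xi>0 x0" using xd(3) xdag by simp
  qed
  show ?thesis
    by (intro exI[of _ xs] conjI) (use BBdom xsBB xssol xsdom part1 part2 part3 in auto)
qed


end
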